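(* Let $H$ be a weak Hopf algebra with bijective antipode $S$, and in ${H_{par}^w}$ put $E_h=[h_1][S(h_2)]$ and $\tilde E_h=[S(h_1)][h_2]$. Then for all $h,k\in H$: (a) $E_k[h]=[h_2]E_{S^{-1}(h_1)k}$; (b) $[h]\tilde E_k=\tilde E_{kS^{-1}(h_2)}[h_1]$; (c) $E_k[h]=\tilde E_{S^{-1}(h_2)}E_k[h_1]$; (d) $[h]\tilde E_k=[h_2]\tilde E_kE_{S^{-1}(h_1)}$.
   Context: All algebras are associative and unital over a field $\Bbbk$; Sweedler notation $\Delta(h)=h_1\otimes h_2$. A weak Hopf algebra is $(H,m,u,\Delta,\varepsilon,S)$ with $H$ an algebra, $(H,\Delta,\varepsilon)$ a coalgebra, and for all $g,h,k$: $\Delta(kh)=\Delta(k)\Delta(h)$; $\varepsilon(kh_1)\varepsilon(h_2g)=\varepsilon(khg)=\varepsilon(kh_2)\varepsilon(h_1g)$; $(1\otimes\Delta(1))(\Delta(1)\otimes1)=\Delta^2(1)=(\Delta(1)\otimes1)(1\otimes\Delta(1))$; $h_1S(h_2)=\varepsilon(1_1h)1_2$; $S(h_1)h_2=1_1\varepsilon(h1_2)$; $S(h)=S(h_1)h_2S(h_3)$, where $\Delta(1)=1_1\otimes1_2$. ${H_{par}^w}=T(H)/I$, where $T(H)$ is the tensor algebra of the vector space $H$ and $I$ is the ideal generated by, for all $h,k\in H$: $1_H-1_{T(H)}$; $h\otimes k_1\otimes S(k_2)-hk_1\otimes S(k_2)$; $h\otimes S(k_1)\otimes k_2-hS(k_1)\otimes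 k_2$; $h_1\otimes S(h_2)\otimes k-h_1\otimes S(h_2)k$; $S(h_1)\otimes h_2\otimes k-S(h_1)\otimes h_2k$; $h-h_1\otimes S(h_2)\otimes h_3$; $[h]$ denotes the class of $h$. *)

theory Defs
  imports Main "HOL.Vector_Spaces"
begin

text \<open>An element of H (x) H (resp. H (x) H (x) H) is represented by a finite list of
  pairs (resp. triples), standing for the sum of the corresponding elementary tensors.
  Two representatives are equal as tensors iff all bilinear (resp. trilinear) forms
  into the ground field agree on them (over a field, linear functionals on a
  tensor product separate points).\<close>

definition bil :: "('k::field \<Rightarrow> 'h::ab_group_add \<Rightarrow> 'h) \<Rightarrow> ('h \<Rightarrow> 'h \<Rightarrow> 'k) \<Rightarrow> bool" where
  "bil sc f \<longleftrightarrow> (\<forall>y. Vector_Spaces.linear sc (*) (\<lambda>x. f x y))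
                 \<and> (\<forall>x. Vector_Spaces.linear sc (*) (\<lambda>y. f x y))"

definition tril :: "('k::field \<Rightarrow> 'h::ab_group_add \<Rightarrow> 'h) \<Rightarrow> ('h \<Rightarrow> 'h \<Rightarrow> 'h \<Rightarrow> 'k) \<Rightarrow> bool" where
  "tril sc f \<longleftrightarrow> (\<forall>y z. Vector_Spaces.linear sc (*) (\<lambda>x. f x y z))
                  \<and> (\<forall>x z. Vector_Spaces.linear sc (*) (\<lambda>y. f x y z))
                  \<and> (\<forall>x y. Vector_Spaces.linear sc (*) (\<lambda>z. f x y z))"

definition teq2 :: "('k::field \<Rightarrow> 'h::ab_group_add \<Rightarrow> 'h) \<Rightarrow> ('h \<times> 'h) list \<Rightarrow> ('h \<times> 'h) list \<Rightarrow> bool" where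
  "teq2 sc xs ys \<longleftrightarrow> (\<forall>f. bil sc f \<longrightarrow>
      sum_list (map (\<lambda>(a,b). f a b) xs) = sum_list (map (\<lambda>(a,b). f a b) ys))"

definition teq3 :: "('k::field \<Rightarrow> 'h::ab_group_add \<Rightarrow> 'h) \<Rightarrow> ('h \<times> 'h \<times> 'h) list \<Rightarrow> ('h \<times> 'h \<times> 'h) list \<Rightarrow> bool" where
  "teq3 sc xs ys \<longleftrightarrow> (\<forall>f. tril sc f \<longrightarrow>
      sum_list (map (\<lambda>(a,b,c). f a b c) xs) = sum_list (map (\<lambda>(a,b,c). f a b c) ys))"

text \<open>(Delta (x) id) Delta h, i.e. h_1 (x) h_2 (x) h_3 written with the first leg expanded.\<close>
definition cop2L :: "('h \<Rightarrow> ('h \<times> 'h) list) \<Rightarrow> 'h \<Rightarrow> ('h \<times> 'h \<times> 'h) list" where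
  "cop2L \<Delta> h = concat (map (\<lambda>(x,y). map (\<lambda>(u,v). (u,v,y)) (\<Delta> x)) (\<Delta> h))"

text \<open>(id (x) Delta) Delta h.\<close>
definition cop2R :: "('h \<Rightarrow> ('h \<times> 'h) list) \<Rightarrow> 'h \<Rightarrow> ('h \<times> 'h \<times> 'h) list" where
  "cop2R \<Delta> h = concat (map (\<lambda>(x,y). map (\<lambda>(u,v). (x,u,v)) (\<Delta> y)) (\<Delta> h))"

definition tmul2 :: "('h::times \<times> 'h) list \<Rightarrow> ('h \<times> 'h) list \<Rightarrow> ('h \<times> 'h) list" where
  "tmul2 xs ys = concat (map (\<lambda>(a,b). map (\<lambda>(c,d). (a*c, b*d)) ys) xs)"

definition tmul3 :: "('h::times \<times> 'h \<times> 'h) list \<Rightarrow> ('h \<times> 'h \<times> 'h) list \<Rightarrow> ('h \<times> 'h \<times> 'h) list" where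
  "tmul3 xs ys = concat (map (\<lambda>(a,b,c). map (\<lambda>(a',b',c'). (a*a', b*b', c*c')) ys) xs)"

text \<open>H is the type 'h, a unital ring with a k-vector-space structure sc making
  multiplication bilinear (a unital associative k-algebra). The comultiplication is given by
  a function choosing for each h a Sweedler representative of Delta(h).\<close>

definition weak_hopf ::
  "('k::field \<Rightarrow> 'h::ring_1 \<Rightarrow> 'h) \<Rightarrow> ('h \<Rightarrow> ('h \<times> 'h) list) \<Rightarrow> ('h \<Rightarrow> 'k) \<Rightarrow> ('h \<Rightarrow> 'h) \<Rightarrow> bool" where
  "weak_hopf sc \<Delta> \<epsilon> S \<longleftrightarrow>
     \<comment> \<open>algebra\<close>
     vector_space sc
   \<and> (\<forall>c a b. sc c (a * b) = sc c a * b \<and> sc c (a * b) = a * sc c b)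
     \<comment> \<open>coalgebra (Delta, epsilon linear; coassociative; counital)\<close>
   \<and> (\<forall>a b. teq2 sc (\<Delta> (a + b)) (\<Delta> a @ \<Delta> b))
   \<and> (\<forall>c a. teq2 sc (\<Delta> (sc c a)) (map (\<lambda>(x,y). (sc c x, y)) (\<Delta> a)))
   \<and> Vector_Spaces.linear sc (*) \<epsilon>
   \<and> (\<forall>h. teq3 sc (cop2L \<Delta> h) (cop2R \<Delta> h))
   \<and> (\<forall>h. sum_list (map (\<lambda>(x,y). sc (\<epsilon> x) y) (\<Delta> h)) = h)
   \<and> (\<forall>h. sum_list (map (\<lambda>(x,y). sc (\<epsilon> y) x) (\<Delta> h)) = h)
     \<comment> \<open>antipode is linear\<close>
   \<and> Vector_Spaces.linear sc sc S
     \<comment> \<open>Delta(kh) = Delta(k) Delta(h)\<close>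
   \<and> (\<forall>k h. teq2 sc (\<Delta> (k * h)) (tmul2 (\<Delta> k) (\<Delta> h)))
     \<comment> \<open>weak multiplicativity of the counit\<close>
   \<and> (\<forall>k h g. sum_list (map (\<lambda>(x,y). \<epsilon> (k * x) * \<epsilon> (y * g)) (\<Delta> h)) = \<epsilon> (k * h * g)
            \<and> \<epsilon> (k * h * g) = sum_list (map (\<lambda>(x,y). \<epsilon> (k * y) * \<epsilon> (x * g)) (\<Delta> h)))
     \<comment> \<open>weak comultiplicativity of the unit\<close>
   \<and> teq3 sc (tmul3 (map (\<lambda>(x,y). (1,x,y)) (\<Delta> 1)) (map (\<lambda>(x,y). (x,y,1)) (\<Delta> 1))) (cop2L \<Delta> 1)
   \<and> teq3 sc (cop2L \<Delta> 1) (tmul3 (map (\<lambda>(x,y). (x,y,1)) (\<Delta> 1)) (map (\<lambda>(x,y). (1,x,y)) (\<Delta> 1)))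
     \<comment> \<open>antipode axioms\<close>
   \<and> (\<forall>h. sum_list (map (\<lambda>(x,y). x * S y) (\<Delta> h))
          = sum_list (map (\<lambda>(x,y). sc (\<epsilon> (x * h)) y) (\<Delta> 1)))
   \<and> (\<forall>h. sum_list (map (\<lambda>(x,y). S x * y) (\<Delta> h))
          = sum_list (map (\<lambda>(x,y). sc (\<epsilon> (h * y)) x) (\<Delta> 1)))
   \<and> (\<forall>h. S h = sum_list (map (\<lambda>(a,b,c). S a * b * S c) (cop2L \<Delta> h)))"

text \<open>The free k-algebra on the set H: formal finite k-linear combinations of words
  (lists) of elements of H, represented by lists of (coefficient, word) pairs and compared
  coefficientwise. The word [h1,...,hn] stands for h1 (x) ... (x) hn. T(H) is this free algebra
  modulo the ideal generated by linearity of the letters; H_par^w = T(H)/I is therefore the free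
  algebra modulo the ideal generated by the linearity relations together with the generators of I.\<close>

type_synonym ('k,'h) fa = "('k \<times> 'h list) list"

definition fa_coeff :: "('k::comm_monoid_add,'h) fa \<Rightarrow> 'h list \<Rightarrow> 'k" where
  "fa_coeff p w = sum_list (map fst (filter (\<lambda>(c,u). u = w) p))"

definition fa_eq :: "('k::comm_monoid_add,'h) fa \<Rightarrow> ('k,'h) fa \<Rightarrow> bool" where
  "fa_eq p q \<longleftrightarrow> (\<forall>w. fa_coeff p w = fa_coeff q w)"

definition fa_mul :: "('k::times,'h) fa \<Rightarrow> ('k,'h) fa \<Rightarrow> ('k,'h) fa" where
  "fa_mul p q = concat (map (\<lambda>(c,u). map (\<lambda>(d,v). (c * d, u @ v)) q) p)"

definition fa_neg :: "('k::uminus,'h) fa \<Rightarrow> ('k,'h) fa" where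
  "fa_neg p = map (\<lambda>(c,u). (- c, u)) p"

definition fa_sub :: "('k::uminus,'h) fa \<Rightarrow> ('k,'h) fa \<Rightarrow> ('k,'h) fa" where
  "fa_sub p q = p @ fa_neg q"

definition fa_sum :: "('a \<Rightarrow> ('k,'h) fa) \<Rightarrow> 'a list \<Rightarrow> ('k,'h) fa" where
  "fa_sum f xs = concat (map f xs)"

definition fa_one :: "('k::one,'h) fa" where
  "fa_one = [(1, [])]"

text \<open>the letter h, i.e. h viewed in degree 1 of T(H)\<close>
definition gen :: "'h \<Rightarrow> ('k::one,'h) fa" where
  "gen h = [(1, [h])]"

inductive_set fa_ideal :: "('k::comm_ring_1,'h) fa set \<Rightarrow> ('k,'h) fa set" for G where
  zero: "[] \<in> fa_ideal G"
| gen_mul: "g \<in> G \<Longrightarrow> fa_mul a (fa_mul g b) \<in> fa_ideal G"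
| add: "p \<in> fa_ideal G \<Longrightarrow> q \<in> fa_ideal G \<Longrightarrow> p @ q \<in> fa_ideal G"
| eq: "p \<in> fa_ideal G \<Longrightarrow> fa_eq p q \<Longrightarrow> q \<in> fa_ideal G"

definition lin_rels :: "('k::field \<Rightarrow> 'h::ab_group_add \<Rightarrow> 'h) \<Rightarrow> ('k,'h) fa set" where
  "lin_rels sc = {fa_sub (gen (a + b)) (gen a @ gen b) | a b. True}
               \<union> {fa_sub (gen (sc c a)) [(c, [a])] | c a. True}"

definition parw_rels ::
  "('h \<Rightarrow> ('h \<times> 'h) list) \<Rightarrow> ('h \<Rightarrow> 'h) \<Rightarrow> ('k::field,'h::ring_1) fa set" where
  "parw_rels \<Delta> S =
      {fa_sub (gen 1) fa_one}
    \<union> {fa_sum (\<lambda>(x,y). fa_sub [(1,[h, x, S y])] [(1,[h * x, S y])]) (\<Delta> k) | h k. True}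
    \<union> {fa_sum (\<lambda>(x,y). fa_sub [(1,[h, S x, y])] [(1,[h * S x, y])]) (\<Delta> k) | h k. True}
    \<union> {fa_sum (\<lambda>(x,y). fa_sub [(1,[x, S y, k])] [(1,[x, S y * k])]) (\<Delta> h) | h k. True}
    \<union> {fa_sum (\<lambda>(x,y). fa_sub [(1,[S x, y, k])] [(1,[S x, y * k])]) (\<Delta> h) | h k. True}
    \<union> {fa_sub (gen h) (fa_sum (\<lambda>(a,b,c). [(1,[a, S b, c])]) (cop2L \<Delta> h)) | h. True}"

definition parw_eq ::
  "('k::field \<Rightarrow> 'h::ring_1 \<Rightarrow> 'h) \<Rightarrow> ('h \<Rightarrow> ('h \<times> 'h) list) \<Rightarrow> ('h \<Rightarrow> 'h)
     \<Rightarrow> ('k,'h) fa \<Rightarrow> ('k,'h) fa \<Rightarrow> bool" where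
  "parw_eq sc \<Delta> S p q \<longleftrightarrow> fa_sub p q \<in> fa_ideal (lin_rels sc \<union> parw_rels \<Delta> S)"

definition E_el :: "('h \<Rightarrow> ('h \<times> 'h) list) \<Rightarrow> ('h \<Rightarrow> 'h) \<Rightarrow> 'h \<Rightarrow> ('k::one,'h) fa" where
  "E_el \<Delta> S h = fa_sum (\<lambda>(x,y). [(1, [x, S y])]) (\<Delta> h)"

definition Et_el :: "('h \<Rightarrow> ('h \<times> 'h) list) \<Rightarrow> ('h \<Rightarrow> 'h) \<Rightarrow> 'h \<Rightarrow> ('k::one,'h) fa" where
  "Et_el \<Delta> S h = fa_sum (\<lambda>(x,y). [(1, [S x, y])]) (\<Delta> h)"

end

theory Submission
  imports Defs "HOL-Library.Function_Algebras"
begin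

definition lin :: "('k::field \<Rightarrow> 'a::ab_group_add \<Rightarrow> 'a) \<Rightarrow> ('k \<Rightarrow> 'b::ab_group_add \<Rightarrow> 'b) \<Rightarrow> ('a \<Rightarrow> 'b) \<Rightarrow> bool" where
 "lin s1 s2 f \<longleftrightarrow> (\<forall>x y. f (x + y) = f x + f y) \<and> (\<forall>c x. f (s1 c x) = s2 c (f x))"

lemma linear_lin: "Vector_Spaces.linear s1 s2 f \<longleftrightarrow> vector_space s1 \<and> vector_space s2 \<and> lin s1 s2 f"
  by (auto simp: linear_iff lin_def)

lemma vs_field: "vector_space ((*) :: 'k::field \<Rightarrow> 'k \<Rightarrow> 'k)"
  by unfold_locales (auto simp: algebra_simps)

lemma separate_sub:
  assumes vs: "vector_space s" and sub: "module.subspace s U" and x: "x \<notin> U"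
  shows "\<exists>\<phi>. Vector_Spaces.linear s (*) \<phi> \<and> (\<forall>u\<in>U. \<phi> u = 0) \<and> \<phi> x = 1"
proof -
  interpret vector_space_pair s "(*)" using vs vs_field by (simp add: vector_space_pair_def)
  obtain B where B: "B \<subseteq> U" "vs1.independent B" "U \<subseteq> vs1.span B"
    using vs1.maximal_independent_subset by blast
  have "vs1.span B \<subseteq> U" using B(1) sub vs1.span_minimal by blast
  hence xB: "x \<notin> vs1.span B" using x by blast
  have ind: "vs1.independent (insert x B)" using vs1.independent_insertI[OF xB B(2)] .
  define g where "g = construct (insert x B) (\<lambda>b. if b = x then 1 else (0::'a))"
  have lg: "Vector_Spaces.linear s (*) g" unfolding g_def by (rule linear_construct[OF ind])
  have gB: "\<forall>b\<in>B. g b = 0" unfolding g_def using construct_basis[OF ind] xB vs1.span_base by fastforce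
  have gx: "g x = 1" unfolding g_def using construct_basis[OF ind] by simp
  have "\<forall>u\<in>U. g u = 0" using linear_eq_0_on_span[OF lg] gB B(3) by blast
  thus ?thesis using lg gx by blast
qed

lemma separate:
  assumes vs: "vector_space s" and x: "x \<noteq> 0"
  shows "\<exists>\<phi>. Vector_Spaces.linear s (*) \<phi> \<and> \<phi> x = 1"
proof -
  have "module.subspace s {0}" using vs by (simp add: module_iff_vector_space[symmetric] module.subspace_single_0)
  thus ?thesis using separate_sub[OF vs, of "{0}" x] x by auto
qed

lemma sum_list_map_concat: "sum_list (map f (concat xss)) = sum_list (map (\<lambda>xs. sum_list (map f xs)) xss)"
  by (induct xss) auto

lemma sum_list_swap:
  fixes f :: "'a \<Rightarrow> 'b \<Rightarrow> 'c::comm_monoid_add"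
  shows   "sum_list (map (\<lambda>x. sum_list (map (f x) ys)) xs) = sum_list (map (\<lambda>y. sum_list (map (\<lambda>x. f x y) xs)) ys)"
proof (induct xs)
  case (Cons a xs)
  have "(\<Sum>y\<leftarrow>ys. f a y + (\<Sum>x\<leftarrow>xs. f x y)) = sum_list (map (f a) ys) + (\<Sum>y\<leftarrow>ys. \<Sum>x\<leftarrow>xs. f x y)"
    using sum_list_addf[of "f a" "\<lambda>y. \<Sum>x\<leftarrow>xs. f x y" ys] by simp
  thus ?case using Cons by simp
qed simp

lemma add_sum_list:
  fixes f :: "'a::ab_group_add \<Rightarrow> 'b::ab_group_add"
  assumes "\<And>x y. f (x + y) = f x + f y"
  shows "f (sum_list (map g xs)) = sum_list (map (\<lambda>x. f (g x)) xs)"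
proof -
  have "f 0 + f 0 = f 0 + 0" using assms[of 0 0] by simp
  hence f0: "f 0 = 0" by simp
  show ?thesis by (induct xs) (auto simp: f0 assms)
qed

lemma lin_sum_list: "lin s1 s2 f \<Longrightarrow> f (sum_list (map g xs)) = sum_list (map (\<lambda>x. f (g x)) xs)"
  unfolding lin_def by (rule add_sum_list) auto

lemma lin_zero: "lin s1 s2 f \<Longrightarrow> f 0 = 0"
  using lin_sum_list[of s1 s2 f _ "[]"] by simp

lemma lin_diff: "lin s1 s2 f \<Longrightarrow> f (x - y) = f x - f y"
proof -
  assume l: "lin s1 s2 f"
  have "f x = f ((x - y) + y)" by simp
  also have "\<dots> = f (x - y) + f y" using l unfolding lin_def by blast
  finally show ?thesis by (simp add: algebra_simps)
qed

lemma vs_scale_sum_list: "vector_space s \<Longrightarrow> s c (sum_list (map g xs)) = sum_list (map (\<lambda>x. s c (g x)) xs)"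
  by (rule add_sum_list) (simp add: vector_space.vector_space_assms(1))

definition bil2 :: "('k::field \<Rightarrow> 'h::ab_group_add \<Rightarrow> 'h) \<Rightarrow> ('k \<Rightarrow> 'v::ab_group_add \<Rightarrow> 'v) \<Rightarrow> ('h \<Rightarrow> 'h \<Rightarrow> 'v) \<Rightarrow> bool" where
  "bil2 sc s F \<longleftrightarrow> (\<forall>y. lin sc s (\<lambda>x. F x y)) \<and> (\<forall>x. lin sc s (\<lambda>y. F x y))"

definition tril3 :: "('k::field \<Rightarrow> 'h::ab_group_add \<Rightarrow> 'h) \<Rightarrow> ('k \<Rightarrow> 'v::ab_group_add \<Rightarrow> 'v) \<Rightarrow> ('h \<Rightarrow> 'h \<Rightarrow> 'h \<Rightarrow> 'v) \<Rightarrow> bool" where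
  "tril3 sc s F \<longleftrightarrow> (\<forall>y z. lin sc s (\<lambda>x. F x y z)) \<and> (\<forall>x z. lin sc s (\<lambda>y. F x y z)) \<and> (\<forall>x y. lin sc s (\<lambda>z. F x y z))"

lemma lin_comp: "lin s1 s2 f \<Longrightarrow> lin s2 s3 g \<Longrightarrow> lin s1 s3 (\<lambda>x. g (f x))"
  unfolding lin_def by auto

lemma teq2_gen:
  assumes eq: "teq2 sc xs ys" and vsH: "vector_space sc" and vs: "vector_space s" and F: "bil2 sc s F"
  shows "sum_list (map (\<lambda>(a,b). F a b) xs) = sum_list (map (\<lambda>(a,b). F a b) ys)"
proof (rule ccontr)
  let ?d = "sum_list (map (\<lambda>(a,b). F a b) xs) - sum_list (map (\<lambda>(a,b). F a b) ys)"
  assume "\<not> ?thesis" hence "?d \<noteq> 0" by simp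
  then obtain \<phi> where \<phi>: "Vector_Spaces.linear s (*) \<phi>" "\<phi> ?d = 1" using separate[OF vs] by blast
  have l\<phi>: "lin s (*) \<phi>" using \<phi>(1) linear_lin by blast
  have "bil sc (\<lambda>a b. \<phi> (F a b))" unfolding bil_def linear_lin using vsH vs_field F l\<phi>
    by (simp add: bil2_def lin_comp[OF _ l\<phi>])
  hence "sum_list (map (\<lambda>(a,b). \<phi> (F a b)) xs) = sum_list (map (\<lambda>(a,b). \<phi> (F a b)) ys)"
    using eq unfolding teq2_def by blast
  moreover have "\<phi> ?d = sum_list (map (\<lambda>(a,b). \<phi> (F a b)) xs) - sum_list (map (\<lambda>(a,b). \<phi> (F a b)) ys)"
  proof -
    have "\<phi> ?d = \<phi> (sum_list (map (\<lambda>(a,b). F a b) xs)) - \<phi> (sum_list (map (\<lambda>(a,b). F a b) ys))"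
      by (rule lin_diff[OF l\<phi>])
    also have "\<dots> = sum_list (map (\<lambda>(a,b). \<phi> (F a b)) xs) - sum_list (map (\<lambda>(a,b). \<phi> (F a b)) ys)"
      by (simp add: lin_sum_list[OF l\<phi>] prod.case_distrib)
    finally show ?thesis .
  qed
  ultimately show False using \<phi>(2) by simp
qed

lemma teq3_gen:
  assumes eq: "teq3 sc xs ys" and vsH: "vector_space sc" and vs: "vector_space s" and F: "tril3 sc s F"
  shows "sum_list (map (\<lambda>(a,b,c). F a b c) xs) = sum_list (map (\<lambda>(a,b,c). F a b c) ys)"
proof (rule ccontr)
  let ?d = "sum_list (map (\<lambda>(a,b,c). F a b c) xs) - sum_list (map (\<lambda>(a,b,c). F a b c) ys)"
  assume "\<not> ?thesis" hence "?d \<noteq> 0" by simp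
  then obtain \<phi> where \<phi>: "Vector_Spaces.linear s (*) \<phi>" "\<phi> ?d = 1" using separate[OF vs] by blast
  have l\<phi>: "lin s (*) \<phi>" using \<phi>(1) linear_lin by blast
  have "tril sc (\<lambda>a b c. \<phi> (F a b c))" unfolding tril_def linear_lin using vsH vs_field F l\<phi>
    by (simp add: tril3_def lin_comp[OF _ l\<phi>])
  hence "sum_list (map (\<lambda>(a,b,c). \<phi> (F a b c)) xs) = sum_list (map (\<lambda>(a,b,c). \<phi> (F a b c)) ys)"
    using eq unfolding teq3_def by blast
  moreover have "\<phi> ?d = sum_list (map (\<lambda>(a,b,c). \<phi> (F a b c)) xs) - sum_list (map (\<lambda>(a,b,c). \<phi> (F a b c)) ys)"
  proof -
    have "\<phi> ?d = \<phi> (sum_list (map (\<lambda>(a,b,c). F a b c) xs)) - \<phi> (sum_list (map (\<lambda>(a,b,c). F a b c) ys))"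
      by (rule lin_diff[OF l\<phi>])
    also have "\<dots> = sum_list (map (\<lambda>(a,b,c). \<phi> (F a b c)) xs) - sum_list (map (\<lambda>(a,b,c). \<phi> (F a b c)) ys)"
      by (simp add: lin_sum_list[OF l\<phi>] prod.case_distrib)
    finally show ?thesis .
  qed
  ultimately show False using \<phi>(2) by simp
qed

locale wha =
  fixes sc :: "'k::field \<Rightarrow> 'h::ring_1 \<Rightarrow> 'h" and \<Delta> :: "'h \<Rightarrow> ('h \<times> 'h) list"
    and \<epsilon> :: "'h \<Rightarrow> 'k" and S :: "'h \<Rightarrow> 'h"
  assumes WH: "weak_hopf sc \<Delta> \<epsilon> S" and bijS: "bij S"
begin

lemma vsH: "vector_space sc" using WH unfolding weak_hopf_def by blast
lemma sc_mult1: "sc c (a * b) = sc c a * b" using WH unfolding weak_hopf_def by blast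
lemma sc_mult2: "sc c (a * b) = a * sc c b" using WH unfolding weak_hopf_def by blast
lemma ax_add: "teq2 sc (\<Delta> (a + b)) (\<Delta> a @ \<Delta> b)" using WH unfolding weak_hopf_def by blast
lemma ax_scale: "teq2 sc (\<Delta> (sc c a)) (map (\<lambda>(x,y). (sc c x, y)) (\<Delta> a))" using WH unfolding weak_hopf_def by blast
lemma L_eps: "lin sc (*) \<epsilon>" using WH unfolding weak_hopf_def linear_lin by blast
lemma ax_coassoc: "teq3 sc (cop2L \<Delta> h) (cop2R \<Delta> h)" using WH unfolding weak_hopf_def by blast
lemma ax_counit1: "sum_list (map (\<lambda>(x,y). sc (\<epsilon> x) y) (\<Delta> h)) = h" using WH unfolding weak_hopf_def by blast
lemma ax_counit2: "sum_list (map (\<lambda>(x,y). sc (\<epsilon> y) x) (\<Delta> h)) = h" using WH unfolding weak_hopf_def by blast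
lemma L_S: "lin sc sc S" using WH unfolding weak_hopf_def linear_lin by blast
lemma ax_mult: "teq2 sc (\<Delta> (k * h)) (tmul2 (\<Delta> k) (\<Delta> h))" using WH unfolding weak_hopf_def by blast
lemma ax_eps1: "sum_list (map (\<lambda>(x,y). \<epsilon> (k * x) * \<epsilon> (y * g)) (\<Delta> h)) = \<epsilon> (k * h * g)"
  using WH unfolding weak_hopf_def by blast
lemma ax_eps2: "\<epsilon> (k * h * g) = sum_list (map (\<lambda>(x,y). \<epsilon> (k * y) * \<epsilon> (x * g)) (\<Delta> h))"
  using WH unfolding weak_hopf_def by blast
lemma ax_unit1: "teq3 sc (tmul3 (map (\<lambda>(x,y). (1,x,y)) (\<Delta> 1)) (map (\<lambda>(x,y). (x,y,1)) (\<Delta> 1))) (cop2L \<Delta> 1)"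
  using WH unfolding weak_hopf_def by blast
lemma ax_unit2: "teq3 sc (cop2L \<Delta> 1) (tmul3 (map (\<lambda>(x,y). (x,y,1)) (\<Delta> 1)) (map (\<lambda>(x,y). (1,x,y)) (\<Delta> 1)))"
  using WH unfolding weak_hopf_def by blast
lemma ax_S1: "sum_list (map (\<lambda>(x,y). x * S y) (\<Delta> h)) = sum_list (map (\<lambda>(x,y). sc (\<epsilon> (x * h)) y) (\<Delta> 1))"
  using WH unfolding weak_hopf_def by blast
lemma ax_S2: "sum_list (map (\<lambda>(x,y). S x * y) (\<Delta> h)) = sum_list (map (\<lambda>(x,y). sc (\<epsilon> (h * y)) x) (\<Delta> 1))"
  using WH unfolding weak_hopf_def by blast
lemma ax_S3: "S h = sum_list (map (\<lambda>(a,b,c). S a * b * S c) (cop2L \<Delta> h))"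
  using WH unfolding weak_hopf_def by blast

definition D :: "'h \<Rightarrow> ('h \<Rightarrow> 'h \<Rightarrow> 'v::ab_group_add) \<Rightarrow> 'v" where
  "D h F = sum_list (map (\<lambda>(a,b). F a b) (\<Delta> h))"

lemma D_add_fun: "D h (\<lambda>a b. F a b + G a b) = D h F + D h G"
  unfolding D_def by (simp add: split_def sum_list_addf)

lemma D_zero_fun: "D h (\<lambda>a b. 0) = 0"
  unfolding D_def by (induct "\<Delta> h") auto

lemma D_push:
  fixes G :: "'a::ab_group_add \<Rightarrow> 'b::ab_group_add"
  assumes "\<And>x y. G (x + y) = G x + G y"
  shows "G (D h M) = D h (\<lambda>a b. G (M a b))"
  unfolding D_def by (simp add: add_sum_list[OF assms] prod.case_distrib)

lemma D_push_lin: "lin s1 s2 G \<Longrightarrow> G (D h M) = D h (\<lambda>a b. G (M a b))"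
  by (rule D_push) (simp add: lin_def)

lemma D_scale_fun: "vector_space s \<Longrightarrow> D h (\<lambda>a b. s c (F a b)) = s c (D h F)"
  by (rule D_push[symmetric]) (simp add: vector_space.vector_space_assms(1))

lemma D_mult_left: "D h (\<lambda>a b. c * F a b) = c * (D h F :: 'a::ring)"
  by (rule D_push[symmetric]) (simp add: algebra_simps)

lemma D_mult_right: "D h (\<lambda>a b. F a b * c) = (D h F :: 'a::ring) * c"
  by (rule D_push[symmetric]) (simp add: algebra_simps)

lemma D_swap: "D h (\<lambda>a b. D g (\<lambda>c d. M a b c d)) = D g (\<lambda>c d. D h (\<lambda>a b. M a b c d))"
  unfolding D_def using sum_list_swap[of "\<lambda>(a,b) (c,d). M a b c d" "\<Delta> g" "\<Delta> h"]
  by (simp add: split_def)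

lemma D_cong: "(\<And>a b. F a b = G a b) \<Longrightarrow> D h F = D h G" by (simp add: D_def)

end

context wha
begin

lemma bil2I: "(\<And>y. lin sc s (\<lambda>x. F x y)) \<Longrightarrow> (\<And>x. lin sc s (\<lambda>y. F x y)) \<Longrightarrow> bil2 sc s F"
  by (simp add: bil2_def)
lemma tril3I: "(\<And>y z. lin sc s (\<lambda>x. F x y z)) \<Longrightarrow> (\<And>x z. lin sc s (\<lambda>y. F x y z)) \<Longrightarrow> (\<And>x y. lin sc s (\<lambda>z. F x y z)) \<Longrightarrow> tril3 sc s F"
  by (simp add: tril3_def)

lemma D_add: "vector_space s \<Longrightarrow> bil2 sc s F \<Longrightarrow> D (a + b) F = D a F + D b F"
  using teq2_gen[OF ax_add vsH, of s F] unfolding D_def by simp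

lemma D_sc: assumes vs: "vector_space s" and F: "bil2 sc s F" shows "D (sc c a) F = s c (D a F)"
proof -
  have "D (sc c a) F = sum_list (map (\<lambda>(x,y). F (sc c x) y) (\<Delta> a))"
    using teq2_gen[OF ax_scale vsH vs F, of c a] unfolding D_def by (simp add: split_def comp_def)
  also have "\<dots> = D a (\<lambda>x y. s c (F x y))" unfolding D_def
    using F unfolding bil2_def lin_def by (simp add: split_def)
  also have "\<dots> = s c (D a F)" by (rule D_scale_fun[OF vs])
  finally show ?thesis .
qed

lemma L_Dh: "vector_space s \<Longrightarrow> bil2 sc s F \<Longrightarrow> lin sc s (\<lambda>h. D h F)"
  unfolding lin_def using D_add D_sc by blast

lemma D_coassoc:
  assumes vs: "vector_space s" and T: "tril3 sc s T"
  shows "D h (\<lambda>x y. D x (\<lambda>u v. T u v y)) = D h (\<lambda>x y. D y (\<lambda>u v. T x u v))"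
  using teq3_gen[OF ax_coassoc vsH vs T, of h]
  unfolding D_def cop2L_def cop2R_def by (simp add: sum_list_map_concat split_def comp_def)

lemma D_counit1: assumes "lin sc s G" "vector_space s" shows "D h (\<lambda>x y. s (\<epsilon> x) (G y)) = G h"
proof -
  have "G h = G (D h (\<lambda>x y. sc (\<epsilon> x) y))" using ax_counit1[of h] by (simp add: D_def)
  also have "\<dots> = D h (\<lambda>x y. G (sc (\<epsilon> x) y))" by (rule D_push_lin[OF assms(1)])
  also have "\<dots> = D h (\<lambda>x y. s (\<epsilon> x) (G y))" by (rule D_cong) (use assms(1) in \<open>simp add: lin_def\<close>)
  finally show ?thesis by (rule sym)
qed

lemma D_counit2: assumes "lin sc s G" "vector_space s" shows "D h (\<lambda>x y. s (\<epsilon> y) (G x)) = G h"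
proof -
  have "G h = G (D h (\<lambda>x y. sc (\<epsilon> y) x))" using ax_counit2[of h] by (simp add: D_def)
  also have "\<dots> = D h (\<lambda>x y. G (sc (\<epsilon> y) x))" by (rule D_push_lin[OF assms(1)])
  also have "\<dots> = D h (\<lambda>x y. s (\<epsilon> y) (G x))" by (rule D_cong) (use assms(1) in \<open>simp add: lin_def\<close>)
  finally show ?thesis by (rule sym)
qed

lemma D_mult: "vector_space s \<Longrightarrow> bil2 sc s F \<Longrightarrow> D (k * h) F = D k (\<lambda>a b. D h (\<lambda>c d. F (a * c) (b * d)))"
  using teq2_gen[OF ax_mult vsH, of s F k h] unfolding D_def tmul2_def
  by (simp add: sum_list_map_concat split_def comp_def)

lemma D_unit1:
  assumes vs: "vector_space s" and T: "tril3 sc s T"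
  shows "D 1 (\<lambda>x y. D 1 (\<lambda>x' y'. T x' (x * y') y)) = D 1 (\<lambda>x y. D x (\<lambda>u v. T u v y))"
  using teq3_gen[OF ax_unit1 vsH vs T]
  unfolding D_def cop2L_def tmul3_def by (simp add: sum_list_map_concat split_def comp_def)

lemma D_unit2:
  assumes vs: "vector_space s" and T: "tril3 sc s T"
  shows "D 1 (\<lambda>x y. D x (\<lambda>u v. T u v y)) = D 1 (\<lambda>x y. D 1 (\<lambda>x' y'. T x (y * x') y'))"
  using teq3_gen[OF ax_unit2 vsH vs T]
  unfolding D_def cop2L_def tmul3_def by (simp add: sum_list_map_concat split_def comp_def)

lemma D_eps1: "D h (\<lambda>x y. \<epsilon> (k * x) * \<epsilon> (y * g)) = \<epsilon> (k * h * g)"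
  using ax_eps1 unfolding D_def by simp
lemma D_eps2: "D h (\<lambda>x y. \<epsilon> (k * y) * \<epsilon> (x * g)) = \<epsilon> (k * h * g)"
  using ax_eps2 unfolding D_def by simp
lemma D_S1: "D h (\<lambda>x y. x * S y) = D 1 (\<lambda>x y. sc (\<epsilon> (x * h)) y)"
  using ax_S1 unfolding D_def by simp
lemma D_S2: "D h (\<lambda>x y. S x * y) = D 1 (\<lambda>x y. sc (\<epsilon> (h * y)) x)"
  using ax_S2 unfolding D_def by simp
lemma D_S3: "S h = D h (\<lambda>x y. D x (\<lambda>a b. S a * b * S y))"
proof -
  have "S h = sum_list (map (\<lambda>(a,b,c). S a * b * S c) (cop2L \<Delta> h))" by (rule ax_S3)
  also have "\<dots> = D h (\<lambda>x y. D x (\<lambda>a b. S a * b * S y))"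
    unfolding D_def cop2L_def by (simp add: sum_list_map_concat split_def comp_def)
  finally show ?thesis .
qed

lemma L_invS: "lin sc sc (inv S)"
proof -
  have inj: "inj S" "surj S" using bij_is_inj[OF bijS] bij_is_surj[OF bijS] by auto
  have "S (inv S x + inv S y) = x + y" for x y using L_S inj by (simp add: lin_def surj_f_inv_f)
  moreover have "S (sc c (inv S x)) = sc c x" for c x using L_S inj by (simp add: lin_def surj_f_inv_f)
  ultimately show ?thesis unfolding lin_def using inj by (metis inv_f_f)
qed

lemma S_inv [simp]: "S (inv S x) = x" using bijS by (simp add: bij_def surj_f_inv_f)
lemma inv_S [simp]: "inv S (S x) = x" using bijS by (simp add: bij_def inv_f_f)

lemma L_id: "lin sc sc (\<lambda>x. x)" by (simp add: lin_def)
lemma vs_scale0: "vector_space s \<Longrightarrow> s c 0 = 0"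
  using vector_space.vector_space_assms(1)[of s c 0 0] by simp
lemma L_const0: "vector_space s \<Longrightarrow> lin sc s (\<lambda>x. 0)" by (simp add: lin_def vs_scale0)
lemma L_add: "vector_space s \<Longrightarrow> lin sc s f \<Longrightarrow> lin sc s g \<Longrightarrow> lin sc s (\<lambda>x. f x + g x)"
  by (simp add: lin_def vector_space.vector_space_assms(1) algebra_simps)
lemma L_mr: "lin sc sc g \<Longrightarrow> lin sc sc (\<lambda>x. g x * a)"
  by (simp add: lin_def algebra_simps sc_mult1)
lemma L_ml: "lin sc sc g \<Longrightarrow> lin sc sc (\<lambda>x. a * g x)"
  by (simp add: lin_def algebra_simps sc_mult2)
lemma L_Sc: "lin sc sc g \<Longrightarrow> lin sc sc (\<lambda>x. S (g x))"
  using L_S by (simp add: lin_def)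
lemma L_iSc: "lin sc sc g \<Longrightarrow> lin sc sc (\<lambda>x. inv S (g x))"
  using L_invS by (simp add: lin_def)
lemma L_epsc: "lin sc sc g \<Longrightarrow> lin sc (*) (\<lambda>x. \<epsilon> (g x))"
  using L_eps by (simp add: lin_def)
lemma L_kmr: "lin sc (*) f \<Longrightarrow> lin sc (*) (\<lambda>x. f x * (c::'k))"
  by (simp add: lin_def algebra_simps)
lemma L_kml: "lin sc (*) f \<Longrightarrow> lin sc (*) (\<lambda>x. (c::'k) * f x)"
  by (simp add: lin_def algebra_simps)
lemma L_scl: "vector_space s \<Longrightarrow> lin sc (*) f \<Longrightarrow> lin sc s (\<lambda>x. s (f x) v)"
  by (simp add: lin_def vector_space.vector_space_assms(2,3))
lemma L_scr: "vector_space s \<Longrightarrow> lin sc s f \<Longrightarrow> lin sc s (\<lambda>x. s c (f x))"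
  by (simp add: lin_def vector_space.vector_space_assms(1,3) mult.commute)
lemma L_Darg: "vector_space s \<Longrightarrow> bil2 sc s M \<Longrightarrow> lin sc sc g \<Longrightarrow> lin sc s (\<lambda>x. D (g x) M)"
  using L_Dh[of s M] by (simp add: lin_def)
lemma L_Dfun: "vector_space s \<Longrightarrow> (\<And>a b. lin sc s (\<lambda>x. M x a b)) \<Longrightarrow> lin sc s (\<lambda>x. D h (M x))"
proof -
  assume vs: "vector_space s" and M: "\<And>a b. lin sc s (\<lambda>x. M x a b)"
  show ?thesis unfolding lin_def
  proof safe
    fix x y have "D h (M (x + y)) = D h (\<lambda>a b. M x a b + M y a b)"
      by (rule D_cong) (use M in \<open>simp add: lin_def\<close>)
    thus "D h (M (x + y)) = D h (M x) + D h (M y)" by (simp add: D_add_fun)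
  next
    fix c x have "D h (M (sc c x)) = D h (\<lambda>a b. s c (M x a b))"
      by (rule D_cong) (use M in \<open>simp add: lin_def\<close>)
    thus "D h (M (sc c x)) = s c (D h (M x))" by (simp add: D_scale_fun[OF vs])
  qed
qed
lemma L_F1: "bil2 sc s F \<Longrightarrow> lin sc sc g \<Longrightarrow> lin sc s (\<lambda>x. F (g x) y)"
  unfolding bil2_def lin_def by simp
lemma L_F2: "bil2 sc s F \<Longrightarrow> lin sc sc g \<Longrightarrow> lin sc s (\<lambda>x. F y (g x))"
  unfolding bil2_def lin_def by simp
lemma L_T1: "tril3 sc s F \<Longrightarrow> lin sc sc g \<Longrightarrow> lin sc s (\<lambda>x. F (g x) y z)"
  unfolding tril3_def lin_def by simp
lemma L_T2: "tril3 sc s F \<Longrightarrow> lin sc sc g \<Longrightarrow> lin sc s (\<lambda>x. F y (g x) z)"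
  unfolding tril3_def lin_def by simp
lemma L_T3: "tril3 sc s F \<Longrightarrow> lin sc sc g \<Longrightarrow> lin sc s (\<lambda>x. F y z (g x))"
  unfolding tril3_def lin_def by simp

lemmas LI = bil2I tril3I vsH vs_field L_id L_add L_mr L_ml L_Sc L_iSc L_epsc L_kmr L_kml L_scl L_scr
   L_Darg L_Dfun

end

context wha begin

definition et :: "'h \<Rightarrow> 'h" where "et h = D h (\<lambda>x y. x * S y)"
definition es :: "'h \<Rightarrow> 'h" where "es h = D h (\<lambda>x y. S x * y)"

lemma et_eq: "et h = D 1 (\<lambda>x y. sc (\<epsilon> (x * h)) y)" unfolding et_def by (rule D_S1)
lemma es_eq: "es h = D 1 (\<lambda>x y. sc (\<epsilon> (h * y)) x)" unfolding es_def by (rule D_S2)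

lemma D_push_F1: "bil2 sc s F \<Longrightarrow> F (D h M) b = D h (\<lambda>x y. F (M x y) b)"
  by (rule D_push_lin) (auto simp: bil2_def)
lemma D_push_F2: "bil2 sc s F \<Longrightarrow> F a (D h M) = D h (\<lambda>x y. F a (M x y))"
  by (rule D_push_lin) (auto simp: bil2_def)

lemma D_one_left: assumes vs: "vector_space s" and F: "bil2 sc s F"
  shows "D 1 (\<lambda>a b. D h (\<lambda>c d. F (a * c) (b * d))) = D h F"
  using D_mult[OF vs F, of 1 h] by simp
lemma D_one_right: assumes vs: "vector_space s" and F: "bil2 sc s F"
  shows "D h (\<lambda>a b. D 1 (\<lambda>c d. F (a * c) (b * d))) = D h F"
  using D_mult[OF vs F, of h 1] by simp

lemma eps_sc: "\<epsilon> (sc c x) = c * \<epsilon> x" using L_eps by (simp add: lin_def)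
lemma eps_et: "\<epsilon> (a * et g) = \<epsilon> (a * g)"
proof -
  have "\<epsilon> (a * et g) = D 1 (\<lambda>x y. \<epsilon> (a * sc (\<epsilon> (x * g)) y))" unfolding et_eq
    by (rule D_push_lin[OF L_epsc[OF L_ml[OF L_id]]])
  also have "\<dots> = D 1 (\<lambda>x y. \<epsilon> (a * y) * \<epsilon> (x * g))"
    by (rule D_cong) (simp add: sc_mult2[symmetric] eps_sc)
  also have "\<dots> = \<epsilon> (a * g)" using D_eps2[where k=a and h=1 and g=g] by (simp add: mult.commute)
  finally show ?thesis .
qed

lemma eps_es: "\<epsilon> (es h * a) = \<epsilon> (h * a)"
proof -
  have "\<epsilon> (es h * a) = D 1 (\<lambda>x y. \<epsilon> (sc (\<epsilon> (h * y)) x * a))" unfolding es_eq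
    by (rule D_push_lin[OF L_epsc[OF L_mr[OF L_id]]])
  also have "\<dots> = D 1 (\<lambda>x y. \<epsilon> (h * y) * \<epsilon> (x * a))"
    by (rule D_cong) (simp add: sc_mult1[symmetric] eps_sc)
  also have "\<dots> = \<epsilon> (h * a)" using D_eps2[where k=h and h=1 and g=a] by (simp add: mult.commute)
  finally show ?thesis .
qed

lemma et_one: "et 1 = 1"
  unfolding et_eq using D_counit1[OF L_id vsH, of 1] by simp
lemma es_one: "es 1 = 1"
  unfolding es_eq using D_counit2[OF L_id vsH, of 1] by simp

lemma W3: assumes vs: "vector_space s" and F: "bil2 sc s F"
  shows "D g (\<lambda>a y'. F a (et y')) = D 1 (\<lambda>x y. F (x * g) y)"
proof -
  note LF = L_F1[OF F] L_F2[OF F]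
  have "D g (\<lambda>a y'. F a (et y')) = D g (\<lambda>a y'. D 1 (\<lambda>x y. s (\<epsilon> (x * y')) (F a y)))"
  proof (rule D_cong)
    fix a y'
    have "F a (et y') = D 1 (\<lambda>x y. F a (sc (\<epsilon> (x * y')) y))" unfolding et_eq by (rule D_push_F2[OF F])
    also have "\<dots> = D 1 (\<lambda>x y. s (\<epsilon> (x * y')) (F a y))" using F by (simp add: bil2_def lin_def)
    finally show "F a (et y') = D 1 (\<lambda>x y. s (\<epsilon> (x * y')) (F a y))" .
  qed
  also have "\<dots> = D 1 (\<lambda>x y. D g (\<lambda>a y'. s (\<epsilon> (x * y')) (F a y)))" by (rule D_swap)
  also have "\<dots> = D 1 (\<lambda>x y. D 1 (\<lambda>x' y'. D g (\<lambda>c d. s (\<epsilon> (x * (y' * d))) (F (x' * c) y))))"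
  proof (rule D_cong)
    fix x y
    show "D g (\<lambda>a y'. s (\<epsilon> (x * y')) (F a y)) = D 1 (\<lambda>x' y'. D g (\<lambda>c d. s (\<epsilon> (x * (y' * d))) (F (x' * c) y)))"
      by (rule D_one_left[OF vs, symmetric]) (assumption | rule LI LF vs)+
  qed
  also have "\<dots> = D 1 (\<lambda>x y. D x (\<lambda>u v. D g (\<lambda>c d. s (\<epsilon> (v * d)) (F (u * c) y))))"
  proof -
    have T: "tril3 sc s (\<lambda>u v y. D g (\<lambda>c d. s (\<epsilon> (v * d)) (F (u * c) y)))"
      by (assumption | rule LI LF vs)+
    show ?thesis using D_unit1[OF vs T] by (simp add: mult.assoc)
  qed
  also have "\<dots> = D 1 (\<lambda>x y. D (x * g) (\<lambda>u v. s (\<epsilon> v) (F u y)))"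
  proof (rule D_cong)
    fix x y
    show "D x (\<lambda>u v. D g (\<lambda>c d. s (\<epsilon> (v * d)) (F (u * c) y))) = D (x * g) (\<lambda>u v. s (\<epsilon> v) (F u y))"
      by (rule D_mult[OF vs, symmetric]) (assumption | rule LI LF vs)+
  qed
  also have "\<dots> = D 1 (\<lambda>x y. F (x * g) y)"
    by (rule D_cong) (rule D_counit2[OF _ vs], (assumption | rule LI LF vs)+)
  finally show ?thesis .
qed

end

context wha begin

lemma W4: assumes vs: "vector_space s" and F: "bil2 sc s F"
  shows "D g (\<lambda>x c. F (es x) c) = D 1 (\<lambda>x y. F x (g * y))"
proof -
  note LF = L_F1[OF F] L_F2[OF F]
  have "D g (\<lambda>x c. F (es x) c) = D g (\<lambda>x c. D 1 (\<lambda>p q. s (\<epsilon> (x * q)) (F p c)))"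
  proof (rule D_cong)
    fix x c
    have "F (es x) c = D 1 (\<lambda>p q. F (sc (\<epsilon> (x * q)) p) c)" unfolding es_eq by (rule D_push_F1[OF F])
    also have "\<dots> = D 1 (\<lambda>p q. s (\<epsilon> (x * q)) (F p c))" using F by (simp add: bil2_def lin_def)
    finally show "F (es x) c = D 1 (\<lambda>p q. s (\<epsilon> (x * q)) (F p c))" .
  qed
  also have "\<dots> = D 1 (\<lambda>x' y'. D g (\<lambda>a b. s (\<epsilon> (a * y')) (F x' b)))" by (rule D_swap)
  also have "\<dots> = D 1 (\<lambda>x' y'. D g (\<lambda>a b. D 1 (\<lambda>x y. s (\<epsilon> (a * x * y')) (F x' (b * y)))))"
  proof (rule D_cong)
    fix x' y'
    show "D g (\<lambda>a b. s (\<epsilon> (a * y')) (F x' b)) = D g (\<lambda>a b. D 1 (\<lambda>x y. s (\<epsilon> (a * x * y')) (F x' (b * y))))"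
      by (rule D_one_right[OF vs, symmetric]) (assumption | rule LI LF vs)+
  qed
  also have "\<dots> = D 1 (\<lambda>x' y'. D 1 (\<lambda>x y. D g (\<lambda>a b. s (\<epsilon> (a * x * y')) (F x' (b * y)))))"
    by (rule D_cong) (rule D_swap)
  also have "\<dots> = D 1 (\<lambda>x y. D 1 (\<lambda>x' y'. D g (\<lambda>a b. s (\<epsilon> (a * (x * y'))) (F x' (b * y)))))"
    by (subst D_swap) (simp add: mult.assoc)
  also have "\<dots> = D 1 (\<lambda>x y. D x (\<lambda>u v. D g (\<lambda>a b. s (\<epsilon> (a * v)) (F u (b * y)))))"
  proof -
    have T: "tril3 sc s (\<lambda>u v y. D g (\<lambda>a b. s (\<epsilon> (a * v)) (F u (b * y))))" by (assumption | rule LI LF vs)+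
    show ?thesis using D_unit1[OF vs T] by simp
  qed
  also have "\<dots> = D 1 (\<lambda>x y. D y (\<lambda>c d. D g (\<lambda>a b. s (\<epsilon> (a * c)) (F x (b * d)))))"
    by (rule D_coassoc[OF vs]) (assumption | rule LI LF vs)+
  also have "\<dots> = D 1 (\<lambda>x y. D g (\<lambda>a b. D y (\<lambda>c d. s (\<epsilon> (a * c)) (F x (b * d)))))"
    by (rule D_cong) (rule D_swap)
  also have "\<dots> = D 1 (\<lambda>x y. D (g * y) (\<lambda>u v. s (\<epsilon> u) (F x v)))"
    by (rule D_cong) (rule D_mult[OF vs, symmetric], (assumption | rule LI LF vs)+)
  also have "\<dots> = D 1 (\<lambda>x y. F x (g * y))"
    by (rule D_cong) (rule D_counit1[OF _ vs], (assumption | rule LI LF vs)+)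
  finally show ?thesis .
qed

lemma D_et: assumes vs: "vector_space s" and F: "bil2 sc s F"
  shows "D (et g) F = D 1 (\<lambda>x y. F (x * et g) y)"
proof -
  note LF = L_F1[OF F] L_F2[OF F]
  have "D (et g) F = D 1 (\<lambda>x y. D (sc (\<epsilon> (x * g)) y) F)" unfolding et_eq
    by (rule D_push_lin[OF L_Dh[OF vs F]])
  also have "\<dots> = D 1 (\<lambda>x y. D y (\<lambda>c d. s (\<epsilon> (x * g)) (F c d)))"
    by (rule D_cong) (simp add: D_sc[OF vs F] D_scale_fun[OF vs])
  also have "\<dots> = D 1 (\<lambda>x y. D x (\<lambda>u v. s (\<epsilon> (u * g)) (F v y)))"
    by (rule D_coassoc[OF vs, symmetric]) (assumption | rule LI LF vs)+
  also have "\<dots> = D 1 (\<lambda>x y. D 1 (\<lambda>x' y'. s (\<epsilon> (x' * g)) (F (x * y') y)))"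
  proof -
    have T: "tril3 sc s (\<lambda>u v y. s (\<epsilon> (u * g)) (F v y))" by (assumption | rule LI LF vs)+
    show ?thesis using D_unit1[OF vs T] by simp
  qed
  also have "\<dots> = D 1 (\<lambda>x y. F (x * et g) y)"
  proof (rule D_cong)
    fix x y
    have "F (x * et g) y = D 1 (\<lambda>x' y'. F (x * sc (\<epsilon> (x' * g)) y') y)" unfolding et_eq
      by (rule D_push_lin) (rule L_F1[OF F], rule L_ml[OF L_id])
    also have "\<dots> = D 1 (\<lambda>x' y'. s (\<epsilon> (x' * g)) (F (x * y') y))"
      using F by (simp add: bil2_def lin_def sc_mult2[symmetric])
    finally show "D 1 (\<lambda>x' y'. s (\<epsilon> (x' * g)) (F (x * y') y)) = F (x * et g) y" by (rule sym)
  qed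
  finally show ?thesis .
qed

lemma D_es: assumes vs: "vector_space s" and F: "bil2 sc s F"
  shows "D (es h) F = D 1 (\<lambda>x y. F x (es h * y))"
proof -
  note LF = L_F1[OF F] L_F2[OF F]
  have "D (es h) F = D 1 (\<lambda>x y. D (sc (\<epsilon> (h * y)) x) F)" unfolding es_eq
    by (rule D_push_lin[OF L_Dh[OF vs F]])
  also have "\<dots> = D 1 (\<lambda>x y. D x (\<lambda>u v. s (\<epsilon> (h * y)) (F u v)))"
    by (rule D_cong) (simp add: D_sc[OF vs F] D_scale_fun[OF vs])
  also have "\<dots> = D 1 (\<lambda>x y. D 1 (\<lambda>x' y'. s (\<epsilon> (h * y)) (F x' (x * y'))))"
  proof -
    have T: "tril3 sc s (\<lambda>u v y. s (\<epsilon> (h * y)) (F u v))" by (assumption | rule LI LF vs)+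
    show ?thesis using D_unit1[OF vs T] by simp
  qed
  also have "\<dots> = D 1 (\<lambda>x' y'. D 1 (\<lambda>x y. s (\<epsilon> (h * y)) (F x' (x * y'))))" by (rule D_swap)
  also have "\<dots> = D 1 (\<lambda>x y. F x (es h * y))"
  proof (rule D_cong)
    fix x' y'
    have "F x' (es h * y') = D 1 (\<lambda>x y. F x' (sc (\<epsilon> (h * y)) x * y'))" unfolding es_eq
      by (rule D_push_lin) (rule L_F2[OF F], rule L_mr[OF L_id])
    also have "\<dots> = D 1 (\<lambda>x y. s (\<epsilon> (h * y)) (F x' (x * y')))"
      using F by (simp add: bil2_def lin_def sc_mult1[symmetric])
    finally show "D 1 (\<lambda>x y. s (\<epsilon> (h * y)) (F x' (x * y'))) = F x' (es h * y')" by (rule sym)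
  qed
  finally show ?thesis .
qed

lemma bil_xSy: "bil2 sc sc (\<lambda>x y. x * S y)" by (rule LI)+
lemma bil_Sxy: "bil2 sc sc (\<lambda>x y. S x * y)" by (rule LI)+

lemma et_cong: "(\<And>x. \<epsilon> (x * a) = \<epsilon> (x * b)) \<Longrightarrow> et a = et b"
  unfolding et_eq by (rule D_cong) simp
lemma es_cong: "(\<And>x. \<epsilon> (a * x) = \<epsilon> (b * x)) \<Longrightarrow> es a = es b"
  unfolding es_eq by (rule D_cong) simp

lemma et_mult: "et (h * g) = D h (\<lambda>a b. a * et g * S b)"
proof -
  have "et (h * g) = et (h * et g)"
    by (rule et_cong) (simp add: mult.assoc[symmetric] eps_et)
  also have "\<dots> = D h (\<lambda>a b. D (et g) (\<lambda>c d. a * c * S (b * d)))"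
    unfolding et_def by (rule D_mult[OF vsH bil_xSy])
  also have "\<dots> = D h (\<lambda>a b. D 1 (\<lambda>x y. a * (x * et g) * S (b * y)))"
    by (rule D_cong) (rule D_et[OF vsH], (rule LI)+)
  also have "\<dots> = D h (\<lambda>a b. a * et g * S b)"
  proof -
    have B: "bil2 sc sc (\<lambda>P Q. P * et g * S Q)" by (rule LI)+
    show ?thesis using D_one_right[OF vsH B, of h] by (simp add: mult.assoc)
  qed
  finally show ?thesis .
qed

end

context wha begin

lemma L_es: "lin sc sc g \<Longrightarrow> lin sc sc (\<lambda>x. es (g x))"
  unfolding es_def by (rule L_Darg[OF vsH bil_Sxy])
lemma L_et: "lin sc sc g \<Longrightarrow> lin sc sc (\<lambda>x. et (g x))"
  unfolding et_def by (rule L_Darg[OF vsH bil_xSy])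

lemmas LJ = LI L_es L_et

lemma es_mult: "es (h * g) = D g (\<lambda>c d. S c * es h * d)"
proof -
  have "es (h * g) = es (es h * g)"
    by (rule es_cong) (simp add: mult.assoc eps_es)
  also have "\<dots> = D (es h) (\<lambda>a b. D g (\<lambda>c d. S (a * c) * (b * d)))"
    unfolding es_def by (rule D_mult[OF vsH bil_Sxy])
  also have "\<dots> = D 1 (\<lambda>x y. D g (\<lambda>c d. S (x * c) * (es h * y * d)))"
    by (rule D_es[OF vsH]) (rule LJ)+
  also have "\<dots> = D g (\<lambda>c d. S c * es h * d)"
  proof -
    have B: "bil2 sc sc (\<lambda>P Q. S P * (es h * Q))" by (rule LJ)+
    show ?thesis using D_one_left[OF vsH B, of g] by (simp add: mult.assoc)
  qed
  finally show ?thesis .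
qed

lemma sc_mult_sc: "sc a x * sc b y = sc (a * b) (x * y)"
proof -
  have "sc a x * sc b y = sc b (sc a x * y)" by (simp add: sc_mult2)
  also have "\<dots> = sc b (sc a (x * y))" by (simp add: sc_mult1)
  also have "\<dots> = sc (a * b) (x * y)" using vector_space.vector_space_assms(3)[OF vsH] by (simp add: mult.commute)
  finally show ?thesis .
qed

lemma es_et_comm: "es q * et p = et p * es q"
proof -
  define T where "T = (\<lambda>a b c. sc (\<epsilon> (a * p) * \<epsilon> (q * c)) b)"
  have T: "tril3 sc sc T" unfolding T_def by (rule LJ)+
  have "es q * et p = D 1 (\<lambda>x y. D 1 (\<lambda>x' y'. sc (\<epsilon> (q * y)) x * sc (\<epsilon> (x' * p)) y'))"
    unfolding es_eq et_eq by (simp add: D_mult_left D_mult_right)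
  also have "\<dots> = D 1 (\<lambda>x y. D 1 (\<lambda>x' y'. T x' (x * y') y))"
    unfolding T_def by (simp add: sc_mult_sc mult.commute)
  also have "\<dots> = D 1 (\<lambda>x y. D 1 (\<lambda>x' y'. T x (y * x') y'))"
    using D_unit1[OF vsH T] D_unit2[OF vsH T] by simp
  also have "\<dots> = D 1 (\<lambda>x y. D 1 (\<lambda>x' y'. sc (\<epsilon> (x * p)) y * sc (\<epsilon> (q * y')) x'))"
    unfolding T_def by (simp add: sc_mult_sc)
  also have "\<dots> = et p * es q"
    unfolding es_eq et_eq by (simp add: D_mult_left D_mult_right)
  finally show ?thesis .
qed

end

context wha begin

lemma es_push: "lin sc s G \<Longrightarrow> G (es x) = D x (\<lambda>a b. G (S a * b))"
  unfolding es_def by (rule D_push_lin)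
lemma et_push: "lin sc s G \<Longrightarrow> G (et x) = D x (\<lambda>a b. G (a * S b))"
  unfolding et_def by (rule D_push_lin)

lemma S_mult: "S (h * g) = S g * S h"
proof -
  have B1: "bil2 sc sc (\<lambda>x y. es x * S y)" by (rule LJ)+
  have "S (h * g) = D (h * g) (\<lambda>x y. D x (\<lambda>a b. S a * b * S y))" by (rule D_S3)
  also have "\<dots> = D (h * g) (\<lambda>x y. es x * S y)"
    unfolding es_def by (rule D_cong) (simp add: D_mult_right)
  also have "\<dots> = D h (\<lambda>h1 h2. D g (\<lambda>g1 g2. es (h1 * g1) * S (h2 * g2)))"
    by (rule D_mult[OF vsH B1])
  also have "\<dots> = D h (\<lambda>h1 h2. D g (\<lambda>g1 g2. D g1 (\<lambda>c d. S c * es h1 * d * S (h2 * g2))))"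
    by (simp add: es_mult D_mult_right)
  also have "\<dots> = D h (\<lambda>h1 h2. D g (\<lambda>c w. D w (\<lambda>d e. S c * es h1 * d * S (h2 * e))))"
    by (rule D_cong, rule D_coassoc[OF vsH]) (rule LJ)+
  also have "\<dots> = D h (\<lambda>h1 h2. D h1 (\<lambda>a b. D g (\<lambda>c w. D w (\<lambda>d e. S c * (S a * b) * d * S (h2 * e)))))"
  proof (rule D_cong)
    fix h1 h2
    show "D g (\<lambda>c w. D w (\<lambda>d e. S c * es h1 * d * S (h2 * e))) =
      D h1 (\<lambda>a b. D g (\<lambda>c w. D w (\<lambda>d e. S c * (S a * b) * d * S (h2 * e))))"
      by (rule es_push[where G="\<lambda>z. D g (\<lambda>c w. D w (\<lambda>d e. S c * z * d * S (h2 * e)))"]) (rule LJ)+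
  qed
  also have "\<dots> = D h (\<lambda>a v. D v (\<lambda>b f. D g (\<lambda>c w. D w (\<lambda>d e. S c * (S a * b) * d * S (f * e)))))"
    by (rule D_coassoc[OF vsH]) (rule LJ)+
  also have "\<dots> = D h (\<lambda>a v. D g (\<lambda>c w. S c * S a * et (v * w)))"
  proof (rule D_cong)
    fix a v
    have "D v (\<lambda>b f. D g (\<lambda>c w. D w (\<lambda>d e. S c * (S a * b) * d * S (f * e)))) =
      D g (\<lambda>c w. D v (\<lambda>b f. D w (\<lambda>d e. S c * (S a * b) * d * S (f * e))))" by (rule D_swap)
    also have "\<dots> = D g (\<lambda>c w. S c * S a * et (v * w))"
    proof (rule D_cong)
      fix c w
      show "D v (\<lambda>b f. D w (\<lambda>d e. S c * (S a * b) * d * S (f * e))) = S c * S a * et (v * w)"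
        by (simp add: et_def D_mult[OF vsH bil_xSy] D_mult_left mult.assoc)
    qed
    finally show "D v (\<lambda>b f. D g (\<lambda>c w. D w (\<lambda>d e. S c * (S a * b) * d * S (f * e)))) =
      D g (\<lambda>c w. S c * S a * et (v * w))" .
  qed
  also have "\<dots> = D h (\<lambda>a v. D g (\<lambda>c w. S c * S a * D v (\<lambda>b f. b * et w * S f)))"
    by (simp only: et_mult)
  also have "\<dots> = D h (\<lambda>a v. D v (\<lambda>b f. D g (\<lambda>c w. S c * S a * (b * et w * S f))))"
  proof (rule D_cong)
    fix a v
    have "D g (\<lambda>c w. S c * S a * D v (\<lambda>b f. b * et w * S f)) = D g (\<lambda>c w. D v (\<lambda>b f. S c * S a * (b * et w * S f)))"
      by (rule D_cong) (rule D_mult_left[symmetric])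
    also have "\<dots> = D v (\<lambda>b f. D g (\<lambda>c w. S c * S a * (b * et w * S f)))" by (rule D_swap)
    finally show "D g (\<lambda>c w. S c * S a * D v (\<lambda>b f. b * et w * S f)) = D v (\<lambda>b f. D g (\<lambda>c w. S c * S a * (b * et w * S f)))" .
  qed
  also have "\<dots> = D h (\<lambda>x f. D x (\<lambda>a b. D g (\<lambda>c w. S c * S a * (b * et w * S f))))"
    by (rule D_coassoc[OF vsH, symmetric]) (rule LJ)+
  also have "\<dots> = D h (\<lambda>x f. D g (\<lambda>c w. S c * es x * et w * S f))"
  proof (rule D_cong)
    fix x f
    have "D g (\<lambda>c w. S c * es x * et w * S f) = D g (\<lambda>c w. D x (\<lambda>a b. S c * (S a * b) * et w * S f))"
      by (rule D_cong) (rule es_push[where G="\<lambda>z. S c * z * et w * S f" for c w], (rule LJ)+)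
    also have "\<dots> = D x (\<lambda>a b. D g (\<lambda>c w. S c * (S a * b) * et w * S f))" by (rule D_swap)
    also have "\<dots> = D x (\<lambda>a b. D g (\<lambda>c w. S c * S a * (b * et w * S f)))" by (simp add: mult.assoc)
    finally show "D x (\<lambda>a b. D g (\<lambda>c w. S c * S a * (b * et w * S f))) = D g (\<lambda>c w. S c * es x * et w * S f)"
      by (rule sym)
  qed
  also have "\<dots> = D h (\<lambda>x f. D g (\<lambda>c w. S c * et w * (es x * S f)))"
  proof -
    have "S c * es x * et w * S f = S c * et w * (es x * S f)" for c x w f
    proof -
      have "S c * es x * et w * S f = S c * (es x * et w) * S f" by (simp add: mult.assoc)
      also have "\<dots> = S c * (et w * es x) * S f" by (simp add: es_et_comm)
      also have "\<dots> = S c * et w * (es x * S f)" by (simp add: mult.assoc)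
      finally show ?thesis .
    qed
    thus ?thesis by simp
  qed
  also have "\<dots> = D g (\<lambda>c w. S c * et w) * D h (\<lambda>x f. es x * S f)"
  proof -
    have "D g (\<lambda>c w. S c * et w) * D h (\<lambda>x f. es x * S f) = D g (\<lambda>c w. S c * et w * D h (\<lambda>x f. es x * S f))"
      by (rule D_mult_right[symmetric])
    also have "\<dots> = D g (\<lambda>c w. D h (\<lambda>x f. S c * et w * (es x * S f)))"
      by (rule D_cong) (rule D_mult_left[symmetric])
    also have "\<dots> = D h (\<lambda>x f. D g (\<lambda>c w. S c * et w * (es x * S f)))" by (rule D_swap)
    finally show ?thesis by (rule sym)
  qed
  also have "\<dots> = S g * S h"
  proof -
    have 1: "D g (\<lambda>c w. S c * et w) = S g"
    proof -
      have "D g (\<lambda>c w. S c * et w) = D g (\<lambda>c w. D w (\<lambda>d e. S c * (d * S e)))"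
        by (rule D_cong) (rule et_push[where G="\<lambda>z. S c * z" for c], (rule LJ)+)
      also have "\<dots> = D g (\<lambda>x e. D x (\<lambda>c d. S c * (d * S e)))"
        by (rule D_coassoc[OF vsH, symmetric]) (rule LJ)+
      also have "\<dots> = S g" by (simp add: D_S3[of g] mult.assoc)
      finally show ?thesis .
    qed
    have 2: "D h (\<lambda>x f. es x * S f) = S h"
    proof -
      have "D h (\<lambda>x f. es x * S f) = D h (\<lambda>x f. D x (\<lambda>a b. S a * b * S f))"
        by (rule D_cong) (rule es_push[where G="\<lambda>z. z * S f" for f], (rule LJ)+)
      also have "\<dots> = S h" by (rule D_S3[symmetric])
      finally show ?thesis .
    qed
    show ?thesis using 1 2 by simp
  qed
  finally show ?thesis .
qed

end

context wha begin

lemma S_push: "lin sc s G \<Longrightarrow> G (S h) = D h (\<lambda>x y. D x (\<lambda>a b. G (S a * b * S y)))"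
proof -
  assume G: "lin sc s G"
  have "G (S h) = D h (\<lambda>x y. G (D x (\<lambda>a b. S a * b * S y)))"
    by (subst D_S3) (rule D_push_lin[OF G])
  also have "\<dots> = D h (\<lambda>x y. D x (\<lambda>a b. G (S a * b * S y)))"
    by (rule D_cong) (rule D_push_lin[OF G])
  finally show ?thesis .
qed

lemma S_es: "S (es z) = et (es z)"
proof -
  have "et (es z) = D 1 (\<lambda>p q. p * S (es z * q))" unfolding et_def by (rule D_es[OF vsH bil_xSy])
  also have "\<dots> = D 1 (\<lambda>p q. p * S q) * S (es z)" by (simp add: S_mult D_mult_right mult.assoc[symmetric])
  also have "\<dots> = S (es z)" using et_one by (simp add: et_def)
  finally show ?thesis by (rule sym)
qed

lemma S_et: "S (et g) = es (et g)"
proof -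
  have "es (et g) = D 1 (\<lambda>p q. S (p * et g) * q)" unfolding es_def by (rule D_et[OF vsH bil_Sxy])
  also have "\<dots> = S (et g) * D 1 (\<lambda>p q. S p * q)" by (simp add: S_mult D_mult_left mult.assoc)
  also have "\<dots> = S (et g)" using es_one by (simp add: es_def)
  finally show ?thesis by (rule sym)
qed

lemma one_et: "vector_space s \<Longrightarrow> bil2 sc s F \<Longrightarrow> D 1 (\<lambda>x y. F x (et y)) = D 1 F"
  using W3[of s F 1] by simp
lemma one_es: "vector_space s \<Longrightarrow> bil2 sc s F \<Longrightarrow> D 1 (\<lambda>x y. F (es x) y) = D 1 F"
  using W4[of s F 1] by simp
lemma one_es_et: assumes vs: "vector_space s" and F: "bil2 sc s F"
  shows "D 1 (\<lambda>x y. F (es x) (et y)) = D 1 F"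
proof -
  note LF = L_F1[OF F] L_F2[OF F]
  have "D 1 (\<lambda>x y. F (es x) (et y)) = D 1 (\<lambda>x y. F x (et y))"
    by (rule one_es[OF vs]) (assumption | rule LJ LF vs)+
  also have "\<dots> = D 1 F" by (rule one_et[OF vs F])
  finally show ?thesis .
qed

lemma D_scale_left: "vector_space s \<Longrightarrow> D h (\<lambda>a b. s (f a b) v) = s (D h f) v"
  by (rule D_push[symmetric]) (simp add: vector_space.vector_space_assms(2))

lemma F_et_es: assumes vs: "vector_space s" and F: "bil2 sc s F"
  shows "F (et u) (es v) = D 1 (\<lambda>p q. D 1 (\<lambda>p' q'. s (\<epsilon> (p * u) * \<epsilon> (v * q')) (F q p')))"
proof -
  have "F (et u) (es v) = D 1 (\<lambda>p q. F (sc (\<epsilon> (p * u)) q) (es v))" unfolding et_eq[of u] by (rule D_push_F1[OF F])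
  also have "\<dots> = D 1 (\<lambda>p q. s (\<epsilon> (p * u)) (F q (es v)))"
    by (rule D_cong) (use F in \<open>simp add: bil2_def lin_def\<close>)
  also have "\<dots> = D 1 (\<lambda>p q. s (\<epsilon> (p * u)) (D 1 (\<lambda>p' q'. s (\<epsilon> (v * q')) (F q p'))))"
  proof (rule D_cong)
    fix p q
    have "F q (es v) = D 1 (\<lambda>p' q'. F q (sc (\<epsilon> (v * q')) p'))" unfolding es_eq[of v] by (rule D_push_F2[OF F])
    also have "\<dots> = D 1 (\<lambda>p' q'. s (\<epsilon> (v * q')) (F q p'))"
      by (rule D_cong) (use F in \<open>simp add: bil2_def lin_def\<close>)
    finally show "s (\<epsilon> (p * u)) (F q (es v)) = s (\<epsilon> (p * u)) (D 1 (\<lambda>p' q'. s (\<epsilon> (v * q')) (F q p')))" by simp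
  qed
  also have "\<dots> = D 1 (\<lambda>p q. D 1 (\<lambda>p' q'. s (\<epsilon> (p * u) * \<epsilon> (v * q')) (F q p')))"
    by (simp add: D_scale_fun[OF vs, symmetric] vector_space.vector_space_assms(3)[OF vs])
  finally show ?thesis .
qed

end

context wha begin
lemma F6: assumes vs: "vector_space s" and F: "bil2 sc s F"
  shows "D 1 (\<lambda>x y. F (S x) (S y)) = D 1 (\<lambda>x y. F y x)"
proof -
  note LF = L_F1[OF F] L_F2[OF F]
  define G where "G = (\<lambda>u v. D 1 (\<lambda>p q. D 1 (\<lambda>p' q'. s (\<epsilon> (p * u) * \<epsilon> (v * q')) (F q p'))))"
  have BG: "bil2 sc s G" unfolding G_def by (assumption | rule LJ LF vs)+
  have "D 1 (\<lambda>x y. F (S x) (S y)) = D 1 (\<lambda>x y. F (S (es x)) (S (et y)))"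
    by (rule one_es_et[OF vs, symmetric]) (assumption | rule LJ LF vs)+
  also have "\<dots> = D 1 (\<lambda>x y. G (es x) (et y))"
    unfolding G_def by (simp add: S_es S_et F_et_es[OF vs F])
  also have "\<dots> = D 1 G" by (rule one_es_et[OF vs BG])
  also have "\<dots> = D 1 (\<lambda>p q. D 1 (\<lambda>p' q'. s (\<epsilon> (p * q')) (F q p')))"
  proof -
    have "D 1 G = D 1 (\<lambda>p q. D 1 (\<lambda>x y. D 1 (\<lambda>p' q'. s (\<epsilon> (p * x) * \<epsilon> (y * q')) (F q p'))))"
      unfolding G_def by (rule D_swap)
    also have "\<dots> = D 1 (\<lambda>p q. D 1 (\<lambda>p' q'. D 1 (\<lambda>x y. s (\<epsilon> (p * x) * \<epsilon> (y * q')) (F q p'))))"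
      by (rule D_cong) (rule D_swap)
    also have "\<dots> = D 1 (\<lambda>p q. D 1 (\<lambda>p' q'. s (\<epsilon> (p * q')) (F q p')))"
      by (intro D_cong) (simp add: D_scale_left[OF vs] D_eps1[where h=1, simplified])
    finally show ?thesis .
  qed
  also have "\<dots> = D 1 (\<lambda>x y. G y x)"
  proof -
    have "D 1 (\<lambda>x y. G y x) = D 1 (\<lambda>p q. D 1 (\<lambda>x y. D 1 (\<lambda>p' q'. s (\<epsilon> (p * y) * \<epsilon> (x * q')) (F q p'))))"
      unfolding G_def by (rule D_swap)
    also have "\<dots> = D 1 (\<lambda>p q. D 1 (\<lambda>p' q'. D 1 (\<lambda>x y. s (\<epsilon> (p * y) * \<epsilon> (x * q')) (F q p'))))"
      by (rule D_cong) (rule D_swap)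
    also have "\<dots> = D 1 (\<lambda>p q. D 1 (\<lambda>p' q'. s (\<epsilon> (p * q')) (F q p')))"
      by (intro D_cong) (simp add: D_scale_left[OF vs] D_eps2[where h=1, simplified])
    finally show ?thesis by (rule sym)
  qed
  also have "\<dots> = D 1 (\<lambda>x y. F (et y) (es x))"
    unfolding G_def by (simp add: F_et_es[OF vs F])
  also have "\<dots> = D 1 (\<lambda>x y. F y x)"
    by (rule one_es_et[OF vs]) (assumption | rule LJ LF vs)+
  finally show ?thesis .
qed

end

context wha begin

lemma F6': assumes vs: "vector_space s" and K: "bil2 sc s K"
  shows "D 1 K = D 1 (\<lambda>x y. K (S y) (S x))"
proof -
  note LF = L_F1[OF K] L_F2[OF K]
  have "D 1 (\<lambda>x y. K (S y) (S x)) = D 1 (\<lambda>x y. K x y)"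
    by (rule F6[OF vs, where F="\<lambda>a b. K b a"]) (assumption | rule LJ LF vs)+
  thus ?thesis by simp
qed

lemma Pb: assumes vs: "vector_space s" and G: "bil2 sc s G"
  shows "D x (\<lambda>x1 x2. D x1 (\<lambda>a b. D x2 (\<lambda>c d. G (S b * c) (S a * d)))) = D 1 (\<lambda>p q. G p (es x * q))"
proof -
  note LF = L_F1[OF G] L_F2[OF G]
  have "D x (\<lambda>x1 x2. D x1 (\<lambda>a b. D x2 (\<lambda>c d. G (S b * c) (S a * d)))) =
        D x (\<lambda>a w. D w (\<lambda>b y. D y (\<lambda>c d. G (S b * c) (S a * d))))"
    by (rule D_coassoc[OF vs]) (assumption | rule LJ LF vs)+
  also have "\<dots> = D x (\<lambda>a w. D w (\<lambda>z d. D z (\<lambda>b c. G (S b * c) (S a * d))))"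
    by (rule D_cong) (rule D_coassoc[OF vs, symmetric], (assumption | rule LJ LF vs)+)
  also have "\<dots> = D x (\<lambda>a w. D w (\<lambda>z d. G (es z) (S a * d)))"
    by (intro D_cong) (rule es_push[where G="\<lambda>t. G t (S a * d)" for a d, symmetric], (assumption | rule LJ LF vs)+)
  also have "\<dots> = D x (\<lambda>a w. D 1 (\<lambda>p q. G p (S a * (w * q))))"
    by (rule D_cong) (rule W4[OF vs, where F="\<lambda>P Q. G P (S a * Q)" for a], (assumption | rule LJ LF vs)+)
  also have "\<dots> = D 1 (\<lambda>p q. D x (\<lambda>a w. G p (S a * (w * q))))" by (rule D_swap)
  also have "\<dots> = D 1 (\<lambda>p q. D x (\<lambda>a w. G p (S a * w * q)))" by (simp only: mult.assoc)
  also have "\<dots> = D 1 (\<lambda>p q. G p (es x * q))"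
    by (rule D_cong) (rule es_push[where G="\<lambda>t. G p (t * q)" for p q, symmetric], (assumption | rule LJ LF vs)+)
  finally show ?thesis .
qed

lemma Qd: assumes vs: "vector_space s" and G: "bil2 sc s G"
  shows "D w (\<lambda>w1 w2. D w1 (\<lambda>a b. D w2 (\<lambda>c d. G (a * S d) (b * S c)))) = D 1 (\<lambda>p q. G (p * et w) q)"
proof -
  note LF = L_F1[OF G] L_F2[OF G]
  have "D w (\<lambda>w1 w2. D w1 (\<lambda>a b. D w2 (\<lambda>c d. G (a * S d) (b * S c)))) =
        D w (\<lambda>w1 w2. D w2 (\<lambda>c d. D w1 (\<lambda>a b. G (a * S d) (b * S c))))"
    by (rule D_cong) (rule D_swap)
  also have "\<dots> = D w (\<lambda>y d. D y (\<lambda>w1 c. D w1 (\<lambda>a b. G (a * S d) (b * S c))))"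
    by (rule D_coassoc[OF vs, symmetric]) (assumption | rule LJ LF vs)+
  also have "\<dots> = D w (\<lambda>y d. D y (\<lambda>a z. D z (\<lambda>b c. G (a * S d) (b * S c))))"
    by (rule D_cong) (rule D_coassoc[OF vs], (assumption | rule LJ LF vs)+)
  also have "\<dots> = D w (\<lambda>y d. D y (\<lambda>a z. G (a * S d) (et z)))"
    by (intro D_cong) (rule et_push[where G="\<lambda>t. G (a * S d) t" for a d, symmetric], (assumption | rule LJ LF vs)+)
  also have "\<dots> = D w (\<lambda>y d. D 1 (\<lambda>p q. G (p * y * S d) q))"
    by (rule D_cong) (rule W3[OF vs, where F="\<lambda>P Q. G (P * S d) Q" for d], (assumption | rule LJ LF vs)+)
  also have "\<dots> = D 1 (\<lambda>p q. D w (\<lambda>y d. G (p * y * S d) q))" by (rule D_swap)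
  also have "\<dots> = D 1 (\<lambda>p q. D w (\<lambda>y d. G (p * (y * S d)) q))" by (simp only: mult.assoc)
  also have "\<dots> = D 1 (\<lambda>p q. G (p * et w) q)"
    by (rule D_cong) (rule et_push[where G="\<lambda>t. G (p * t) q" for p q, symmetric], (assumption | rule LJ LF vs)+)
  finally show ?thesis .
qed

end

context wha begin

lemma D_S: assumes vs: "vector_space s" and F: "bil2 sc s F"
  shows "D (S h) F = D h (\<lambda>x y. F (S y) (S x))"
proof -
  note LF = L_F1[OF F] L_F2[OF F]
  have "D (S h) F = D h (\<lambda>x y. D x (\<lambda>a b. D (S a * b * S y) F))"
    by (rule S_push) (assumption | rule LJ LF vs)+
  also have "\<dots> = D h (\<lambda>x y. D x (\<lambda>a b. D (S a * b) (\<lambda>u v. D (S y) (\<lambda>c d. F (u * c) (v * d)))))"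
    by (intro D_cong) (rule D_mult[OF vs], (assumption | rule LJ LF vs)+)
  also have "\<dots> = D h (\<lambda>x y. D (es x) (\<lambda>u v. D (S y) (\<lambda>c d. F (u * c) (v * d))))"
    by (intro D_cong) (rule es_push[where G="\<lambda>z. D z (\<lambda>u v. D (S y) (\<lambda>c d. F (u * c) (v * d)))" for y, symmetric], (assumption | rule LJ LF vs)+)
  also have "\<dots> = D h (\<lambda>x y. D 1 (\<lambda>p q. D (S y) (\<lambda>c d. F (p * c) (es x * q * d))))"
    by (intro D_cong) (rule D_es[OF vs], (assumption | rule LJ LF vs)+)
  also have "\<dots> = D h (\<lambda>x y. D x (\<lambda>x1 x2. D x1 (\<lambda>a b. D x2 (\<lambda>c' d'. D (S y) (\<lambda>c d. F (S b * c' * c) (S a * d' * d))))))"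
    by (intro D_cong) (rule Pb[OF vs, where G="\<lambda>P Q. D (S y) (\<lambda>c d. F (P * c) (Q * d))" for y, symmetric], (assumption | rule LJ LF vs)+)
  also have "\<dots> = D h (\<lambda>x1 w. D w (\<lambda>x2 y. D x1 (\<lambda>a b. D x2 (\<lambda>c' d'. D (S y) (\<lambda>c d. F (S b * c' * c) (S a * d' * d))))))"
    by (rule D_coassoc[OF vs]) (assumption | rule LJ LF vs)+
  also have "\<dots> = D h (\<lambda>x1 w. D x1 (\<lambda>a b. D w (\<lambda>x2 y. D x2 (\<lambda>c' d'. D (S y) (\<lambda>c d. F (S b * c' * c) (S a * d' * d))))))"
    by (rule D_cong) (rule D_swap)
  also have "\<dots> = D h (\<lambda>x1 w. D x1 (\<lambda>a b. D w (\<lambda>x2 y. D x2 (\<lambda>c' d'. D (S y) (\<lambda>c d. F (S b * (c' * c)) (S a * (d' * d)))))))"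
    by (simp only: mult.assoc)
  also have "\<dots> = D h (\<lambda>x1 w. D x1 (\<lambda>a b. D w (\<lambda>x2 y. D (x2 * S y) (\<lambda>P Q. F (S b * P) (S a * Q)))))"
    by (intro D_cong) (rule D_mult[OF vs, symmetric], (assumption | rule LJ LF vs)+)
  also have "\<dots> = D h (\<lambda>x1 w. D x1 (\<lambda>a b. D (et w) (\<lambda>P Q. F (S b * P) (S a * Q))))"
    by (intro D_cong) (rule et_push[where G="\<lambda>z. D z (\<lambda>P Q. F (S b * P) (S a * Q))" for a b, symmetric], (assumption | rule LJ LF vs)+)
  also have "\<dots> = D h (\<lambda>x1 w. D x1 (\<lambda>a b. D 1 (\<lambda>p q. F (S b * (p * et w)) (S a * q))))"
    by (intro D_cong) (rule D_et[OF vs], (assumption | rule LJ LF vs)+)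
  also have "\<dots> = D h (\<lambda>x1 w. D x1 (\<lambda>a b. D w (\<lambda>w1 w2. D w1 (\<lambda>a' b'. D w2 (\<lambda>c d. F (S b * (a' * S d)) (S a * (b' * S c)))))))"
    by (intro D_cong) (rule Qd[OF vs, where G="\<lambda>P Q. F (S b * P) (S a * Q)" for a b, symmetric], (assumption | rule LJ LF vs)+)
  also have "\<dots> = D h (\<lambda>x1 w. D w (\<lambda>w1 w2. D x1 (\<lambda>a b. D w1 (\<lambda>a' b'. D w2 (\<lambda>c d. F (S b * (a' * S d)) (S a * (b' * S c)))))))"
    by (rule D_cong) (rule D_swap)
  also have "\<dots> = D h (\<lambda>v w2. D v (\<lambda>x1 w1. D x1 (\<lambda>a b. D w1 (\<lambda>a' b'. D w2 (\<lambda>c d. F (S b * (a' * S d)) (S a * (b' * S c)))))))"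
    by (rule D_coassoc[OF vs, symmetric]) (assumption | rule LJ LF vs)+
  also have "\<dots> = D h (\<lambda>v w2. D v (\<lambda>x1 w1. D x1 (\<lambda>a b. D w1 (\<lambda>a' b'. D w2 (\<lambda>c d. F (S b * a' * S d) (S a * b' * S c))))))"
    by (simp only: mult.assoc)
  also have "\<dots> = D h (\<lambda>v w2. D 1 (\<lambda>p q. D w2 (\<lambda>c d. F (p * S d) (es v * q * S c))))"
    by (rule D_cong) (rule Pb[OF vs, where G="\<lambda>P Q. D w2 (\<lambda>c d. F (P * S d) (Q * S c))" for w2], (assumption | rule LJ LF vs)+)
  also have "\<dots> = D h (\<lambda>v w2. D 1 (\<lambda>p q. D w2 (\<lambda>c d. F (S q * S d) (es v * S p * S c))))"
    by (rule D_cong) (rule F6'[OF vs, where K="\<lambda>p q. D w2 (\<lambda>c d. F (p * S d) (es v * q * S c))" for v w2], (assumption | rule LJ LF vs)+)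
  also have "\<dots> = D h (\<lambda>v w2. D 1 (\<lambda>p q. D w2 (\<lambda>c d. F (S (d * q)) (es v * S (c * p)))))"
    by (simp add: S_mult mult.assoc)
  also have "\<dots> = D h (\<lambda>v w2. D w2 (\<lambda>c d. D 1 (\<lambda>p q. F (S (d * q)) (es v * S (c * p)))))"
    by (rule D_cong) (rule D_swap)
  also have "\<dots> = D h (\<lambda>v w2. D w2 (\<lambda>c d. F (S d) (es v * S c)))"
    by (rule D_cong) (rule D_one_right[OF vs, where F="\<lambda>P Q. F (S Q) (es v * S P)" for v], (assumption | rule LJ LF vs)+)
  also have "\<dots> = D h (\<lambda>v w2. D w2 (\<lambda>c d. D v (\<lambda>a b. F (S d) (S a * b * S c))))"
    by (intro D_cong) (rule es_push[where G="\<lambda>z. F (S d) (z * S c)" for c d], (assumption | rule LJ LF vs)+)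
  also have "\<dots> = D h (\<lambda>x d. D x (\<lambda>v c. D v (\<lambda>a b. F (S d) (S a * b * S c))))"
    by (rule D_coassoc[OF vs, symmetric]) (assumption | rule LJ LF vs)+
  also have "\<dots> = D h (\<lambda>x d. F (S d) (S x))"
    by (rule D_cong) (rule S_push[where G="\<lambda>z. F (S d) z" for d, symmetric], (assumption | rule LJ LF vs)+)
  finally show ?thesis .
qed

lemma D_invS: assumes vs: "vector_space s" and F: "bil2 sc s F"
  shows "D (inv S h) F = D h (\<lambda>x y. F (inv S y) (inv S x))"
proof -
  note LF = L_F1[OF F] L_F2[OF F]
  have "D h (\<lambda>x y. F (inv S y) (inv S x)) = D (S (inv S h)) (\<lambda>x y. F (inv S y) (inv S x))" by simp
  also have "\<dots> = D (inv S h) (\<lambda>x y. F (inv S (S x)) (inv S (S y)))"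
    by (rule D_S[OF vs]) (assumption | rule LJ LF vs)+
  also have "\<dots> = D (inv S h) F" by simp
  finally show ?thesis by (rule sym)
qed

end

context wha begin

lemma idA_aux: assumes vs: "vector_space s" and F: "bil2 sc s F"
  shows "D (S g) (\<lambda>x y. D (inv S x * k) (\<lambda>c d. F (y * c) (S d))) = D k (\<lambda>x y. F x (S y * S g))"
proof -
  note LF = L_F1[OF F] L_F2[OF F]
  have "D (S g) (\<lambda>x y. D (inv S x * k) (\<lambda>c d. F (y * c) (S d))) = D g (\<lambda>a b. D (inv S (S b) * k) (\<lambda>c d. F (S a * c) (S d)))"
    by (rule D_S[OF vs]) (assumption | rule LJ LF vs)+
  also have "\<dots> = D g (\<lambda>a b. D b (\<lambda>b1 b2. D k (\<lambda>k1 k2. F (S a * (b1 * k1)) (S (b2 * k2)))))"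
    by (simp only: inv_S) (rule D_cong, rule D_mult[OF vs], (assumption | rule LJ LF vs)+)
  also have "\<dots> = D g (\<lambda>x b2. D x (\<lambda>a b1. D k (\<lambda>k1 k2. F (S a * (b1 * k1)) (S (b2 * k2)))))"
    by (rule D_coassoc[OF vs, symmetric]) (assumption | rule LJ LF vs)+
  also have "\<dots> = D g (\<lambda>x b2. D x (\<lambda>a b1. D k (\<lambda>k1 k2. F (S a * b1 * k1) (S (b2 * k2)))))"
    by (simp only: mult.assoc)
  also have "\<dots> = D g (\<lambda>x b2. D k (\<lambda>k1 k2. F (es x * k1) (S (b2 * k2))))"
    by (rule D_cong) (rule es_push[where G="\<lambda>z. D k (\<lambda>k1 k2. F (z * k1) (S (b2 * k2)))" for b2, symmetric], (assumption | rule LJ LF vs)+)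
  also have "\<dots> = D 1 (\<lambda>p q. D k (\<lambda>k1 k2. F (p * k1) (S (g * q * k2))))"
    by (rule W4[OF vs, where F="\<lambda>P Q. D k (\<lambda>k1 k2. F (P * k1) (S (Q * k2)))"]) (assumption | rule LJ LF vs)+
  also have "\<dots> = D 1 (\<lambda>p q. D k (\<lambda>k1 k2. F (p * k1) (S (q * k2) * S g)))"
    by (simp add: S_mult mult.assoc)
  also have "\<dots> = D k (\<lambda>k1 k2. F k1 (S k2 * S g))"
    by (rule D_one_left[OF vs, where F="\<lambda>P Q. F P (S Q * S g)"]) (assumption | rule LJ LF vs)+
  finally show ?thesis .
qed

lemma idA: assumes vs: "vector_space s" and F: "bil2 sc s F"
  shows "D k (\<lambda>x y. F x (S y * h)) = D h (\<lambda>x y. D (inv S x * k) (\<lambda>c d. F (y * c) (S d)))"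
  using idA_aux[OF vs F, of "inv S h" k] by simp

lemma idB_aux: assumes vs: "vector_space s" and F: "bil2 sc s F"
  shows "D (S g) (\<lambda>x y. D (k * inv S y) (\<lambda>c d. F (S c) (d * x))) = D k (\<lambda>x y. F (S g * S x) y)"
proof -
  note LF = L_F1[OF F] L_F2[OF F]
  have "D (S g) (\<lambda>x y. D (k * inv S y) (\<lambda>c d. F (S c) (d * x))) = D g (\<lambda>a b. D (k * inv S (S a)) (\<lambda>c d. F (S c) (d * S b)))"
    by (rule D_S[OF vs]) (assumption | rule LJ LF vs)+
  also have "\<dots> = D g (\<lambda>a b. D k (\<lambda>k1 k2. D a (\<lambda>a1 a2. F (S (k1 * a1)) (k2 * a2 * S b))))"
    by (simp only: inv_S) (rule D_cong, rule D_mult[OF vs], (assumption | rule LJ LF vs)+)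
  also have "\<dots> = D g (\<lambda>a b. D a (\<lambda>a1 a2. D k (\<lambda>k1 k2. F (S (k1 * a1)) (k2 * a2 * S b))))"
    by (rule D_cong) (rule D_swap)
  also have "\<dots> = D g (\<lambda>a1 w. D w (\<lambda>a2 b. D k (\<lambda>k1 k2. F (S (k1 * a1)) (k2 * a2 * S b))))"
    by (rule D_coassoc[OF vs]) (assumption | rule LJ LF vs)+
  also have "\<dots> = D g (\<lambda>a1 w. D w (\<lambda>a2 b. D k (\<lambda>k1 k2. F (S (k1 * a1)) (k2 * (a2 * S b)))))"
    by (simp only: mult.assoc)
  also have "\<dots> = D g (\<lambda>a1 w. D k (\<lambda>k1 k2. F (S (k1 * a1)) (k2 * et w)))"
    by (rule D_cong) (rule et_push[where G="\<lambda>z. D k (\<lambda>k1 k2. F (S (k1 * a1)) (k2 * z))" for a1, symmetric], (assumption | rule LJ LF vs)+)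
  also have "\<dots> = D 1 (\<lambda>p q. D k (\<lambda>k1 k2. F (S (k1 * (p * g))) (k2 * q)))"
    by (rule W3[OF vs, where F="\<lambda>P Q. D k (\<lambda>k1 k2. F (S (k1 * P)) (k2 * Q))"]) (assumption | rule LJ LF vs)+
  also have "\<dots> = D 1 (\<lambda>p q. D k (\<lambda>k1 k2. F (S g * S (k1 * p)) (k2 * q)))"
    by (simp add: S_mult mult.assoc)
  also have "\<dots> = D k (\<lambda>k1 k2. D 1 (\<lambda>p q. F (S g * S (k1 * p)) (k2 * q)))" by (rule D_swap)
  also have "\<dots> = D k (\<lambda>k1 k2. F (S g * S k1) k2)"
    by (rule D_one_right[OF vs, where F="\<lambda>P Q. F (S g * S P) Q"]) (assumption | rule LJ LF vs)+
  finally show ?thesis .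
qed

lemma idB: assumes vs: "vector_space s" and F: "bil2 sc s F"
  shows "D k (\<lambda>x y. F (h * S x) y) = D h (\<lambda>x y. D (k * inv S y) (\<lambda>c d. F (S c) (d * x)))"
  using idB_aux[OF vs F, of "inv S h" k] by (simp add: S_mult)

lemma idA3: assumes vs: "vector_space s" and T: "tril3 sc s T"
  shows "D h (\<lambda>x y. D (inv S x * k) (\<lambda>c d. T y c (S d))) = D h (\<lambda>x y. D (inv S y) (\<lambda>a b. D k (\<lambda>c d. T (S a) (b * c) (S d * x))))"
proof -
  note LF = L_T1[OF T] L_T2[OF T] L_T3[OF T]
  obtain g where hg: "h = S g" using S_inv by metis
  have "D (S g) (\<lambda>x y. D (inv S x * k) (\<lambda>c d. T y c (S d))) = D g (\<lambda>a b. D (inv S (S b) * k) (\<lambda>c d. T (S a) c (S d)))"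
    by (rule D_S[OF vs]) (assumption | rule LJ LF vs)+
  also have "\<dots> = D g (\<lambda>a b. D b (\<lambda>b1 b2. D k (\<lambda>k1 k2. T (S a) (b1 * k1) (S (b2 * k2)))))"
    by (simp only: inv_S) (rule D_cong, rule D_mult[OF vs], (assumption | rule LJ LF vs)+)
  also have "\<dots> = D g (\<lambda>a w. D w (\<lambda>b b'. D k (\<lambda>c d. T (S a) (b * c) (S d * S b'))))"
    by (simp add: S_mult)
  also have "\<dots> = D g (\<lambda>a' b'. D a' (\<lambda>a b. D k (\<lambda>c d. T (S a) (b * c) (S d * S b'))))"
    by (rule D_coassoc[OF vs, symmetric]) (assumption | rule LJ LF vs)+
  also have "\<dots> = D (S g) (\<lambda>x y. D (inv S y) (\<lambda>a b. D k (\<lambda>c d. T (S a) (b * c) (S d * x))))"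
    by (subst D_S[OF vs]) ((assumption | rule LJ LF vs)+, simp)
  finally show ?thesis using hg by simp
qed

lemma idB3: assumes vs: "vector_space s" and T: "tril3 sc s T"
  shows "D h (\<lambda>x y. D (k * inv S y) (\<lambda>c d. T (S c) d x)) = D h (\<lambda>x y. D k (\<lambda>c d. D (inv S x) (\<lambda>a b. T (y * S c) (d * a) (S b))))"
proof -
  note LF = L_T1[OF T] L_T2[OF T] L_T3[OF T]
  obtain g where hg: "h = S g" using S_inv by metis
  have "D (S g) (\<lambda>x y. D (k * inv S y) (\<lambda>c d. T (S c) d x)) = D g (\<lambda>a b. D (k * inv S (S a)) (\<lambda>c d. T (S c) d (S b)))"
    by (rule D_S[OF vs]) (assumption | rule LJ LF vs)+
  also have "\<dots> = D g (\<lambda>a b. D k (\<lambda>k1 k2. D a (\<lambda>a1 a2. T (S (k1 * a1)) (k2 * a2) (S b))))"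
    by (simp only: inv_S) (rule D_cong, rule D_mult[OF vs], (assumption | rule LJ LF vs)+)
  also have "\<dots> = D g (\<lambda>a b. D a (\<lambda>a1 a2. D k (\<lambda>c d. T (S a1 * S c) (d * a2) (S b))))"
    by (rule D_cong) (simp add: S_mult D_swap[of k])
  also have "\<dots> = D g (\<lambda>a' b'. D b' (\<lambda>a b. D k (\<lambda>c d. T (S a' * S c) (d * a) (S b))))"
    by (rule D_coassoc[OF vs]) (assumption | rule LJ LF vs)+
  also have "\<dots> = D g (\<lambda>a' b'. D k (\<lambda>c d. D b' (\<lambda>a b. T (S a' * S c) (d * a) (S b))))"
    by (rule D_cong) (rule D_swap)
  also have "\<dots> = D (S g) (\<lambda>x y. D k (\<lambda>c d. D (inv S x) (\<lambda>a b. T (y * S c) (d * a) (S b))))"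
    by (subst D_S[OF vs]) ((assumption | rule LJ LF vs)+, simp)
  finally show ?thesis using hg by simp
qed

end

definition PS :: "('h list \<Rightarrow> 'k::comm_ring_1) \<Rightarrow> ('k \<times> 'h list) list \<Rightarrow> 'k" where
  "PS W r = sum_list (map (\<lambda>(c,w). c * W w) r)"

lemma PS_Nil[simp]: "PS W [] = 0" by (simp add: PS_def)
lemma PS_Cons[simp]: "PS W ((c,w) # r) = c * W w + PS W r" by (simp add: PS_def)
lemma PS_append[simp]: "PS W (p @ q) = PS W p + PS W q" by (simp add: PS_def)
lemma PS_neg[simp]: "PS W (fa_neg p) = - PS W p"
  by (induct p) (auto simp: fa_neg_def PS_def)
lemma PS_sub[simp]: "PS W (fa_sub p q) = PS W p - PS W q" by (simp add: fa_sub_def)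
lemma PS_sum[simp]: "PS W (fa_sum f xs) = sum_list (map (\<lambda>x. PS W (f x)) xs)"
  by (induct xs) (auto simp: fa_sum_def)
lemma PS_mul: "PS W (fa_mul p q) = sum_list (map (\<lambda>(c,u). sum_list (map (\<lambda>(d,v). c * d * W (u @ v)) q)) p)"
  by (simp add: PS_def fa_mul_def sum_list_map_concat split_def comp_def)
lemma PS_sandwich: "PS W (fa_mul [(1,u)] (fa_mul g [(1,v)])) = sum_list (map (\<lambda>(c,w). c * W (u @ w @ v)) g)"
  by (simp add: PS_mul PS_def fa_mul_def sum_list_map_concat split_def comp_def)

lemma fa_coeff_append: "fa_coeff (p @ q) w = fa_coeff p w + fa_coeff q w"
  by (simp add: fa_coeff_def)
lemma fa_coeff_Nil: "fa_coeff [] w = 0" by (simp add: fa_coeff_def)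
lemma fa_coeff_Cons: "fa_coeff ((c,u) # p) w = (if u = w then c else 0) + fa_coeff p w"
  by (simp add: fa_coeff_def)
lemma fa_coeff_neg: "fa_coeff (fa_neg p) w = - fa_coeff (p :: ('k::comm_ring_1,'h) fa) w"
  by (induct p) (auto simp: fa_neg_def fa_coeff_Cons fa_coeff_Nil)
lemma fa_coeff_sub: "fa_coeff (fa_sub p q) w = fa_coeff p w - fa_coeff (q :: ('k::comm_ring_1,'h) fa) w"
  by (simp add: fa_sub_def fa_coeff_append fa_coeff_neg)

definition fscale :: "'k::times \<Rightarrow> ('k,'h) fa \<Rightarrow> ('k,'h) fa" where
  "fscale c p = map (\<lambda>(d,u). (c * d, u)) p"

lemma fa_coeff_fscale: "fa_coeff (fscale c p) w = (c::'k::comm_ring_1) * fa_coeff p w"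
  by (induct p) (auto simp: fscale_def fa_coeff_Cons fa_coeff_Nil algebra_simps)

lemma fscale_mul: "fscale c (fa_mul a b) = fa_mul (fscale (c::'k::comm_ring_1) a) b"
  by (simp add: fscale_def fa_mul_def map_concat split_def comp_def mult.assoc)

lemma ideal_fscale: "p \<in> fa_ideal G \<Longrightarrow> fscale c p \<in> fa_ideal G"
proof (induct rule: fa_ideal.induct)
  case zero thus ?case by (simp add: fscale_def fa_ideal.zero)
next
  case (gen_mul g a b) thus ?case by (simp add: fscale_mul fa_ideal.gen_mul)
next
  case (add p q) thus ?case by (simp add: fscale_def fa_ideal.add)
next
  case (eq p q) thus ?case using fa_ideal.eq by (metis fa_eq_def fa_coeff_fscale)
qed

definition sV :: "'k::field \<Rightarrow> ('h list \<Rightarrow> 'k) \<Rightarrow> ('h list \<Rightarrow> 'k)" where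
  "sV c f = (\<lambda>w. c * f w)"

lemma vs_sV: "vector_space (sV :: 'k::field \<Rightarrow> ('h list \<Rightarrow> 'k) \<Rightarrow> _)"
  by unfold_locales (auto simp: sV_def algebra_simps)

lemma subspace_J: "module.subspace (sV :: 'k::field \<Rightarrow> _) ((\<lambda>r. fa_coeff r) ` fa_ideal (G :: ('k,'h) fa set))"
proof -
  interpret vector_space "sV :: 'k::field \<Rightarrow> ('h list \<Rightarrow> 'k) \<Rightarrow> _" by (rule vs_sV)
  show ?thesis unfolding subspace_def
  proof safe
    show "0 \<in> (\<lambda>r. fa_coeff r) ` fa_ideal G"
      by (rule image_eqI[of _ _ "[]"]) (auto simp: fa_coeff_Nil fun_eq_iff fa_ideal.zero)
  next
    fix p q assume "p \<in> fa_ideal G" "q \<in> fa_ideal G"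
    thus "fa_coeff p + fa_coeff q \<in> (\<lambda>r. fa_coeff r) ` fa_ideal G"
      by (intro image_eqI[of _ _ "p @ q"]) (auto simp: fa_coeff_append fun_eq_iff fa_ideal.add)
  next
    fix c and p :: "('k,'h) fa" assume "p \<in> fa_ideal G"
    thus "sV c (fa_coeff p) \<in> (\<lambda>r. fa_coeff r) ` fa_ideal G"
      by (intro image_eqI[of _ _ "fscale c p"]) (auto simp: fa_coeff_fscale fun_eq_iff sV_def ideal_fscale)
  qed
qed

lemma PS_coeff:
  fixes \<phi> :: "('h list \<Rightarrow> 'k::field) \<Rightarrow> 'k" and r :: "('k,'h) fa"
  assumes "lin sV (*) \<phi>"
  shows "PS (\<lambda>w. \<phi> (fa_coeff [(1,w)])) r = \<phi> (fa_coeff r)"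
proof (induct r)
  case Nil
  have "fa_coeff ([] :: ('k,'h) fa) = 0" by (simp add: fa_coeff_Nil fun_eq_iff)
  hence "\<phi> (fa_coeff ([] :: ('k,'h) fa)) = \<phi> 0" by simp
  also have "\<dots> = 0" using lin_zero[OF assms] .
  finally show ?case by simp
next
  case (Cons x r)
  obtain c u where x: "x = (c,u)" by fastforce
  have "fa_coeff ((c,u) # r) = sV c (fa_coeff [(1,u)]) + fa_coeff r"
    by (simp add: fun_eq_iff fa_coeff_Cons fa_coeff_Nil sV_def)
  hence "\<phi> (fa_coeff ((c,u) # r)) = c * \<phi> (fa_coeff [(1,u)]) + \<phi> (fa_coeff r)"
    using assms by (simp add: lin_def)
  thus ?case using Cons x by simp
qed

definition good :: "('k::field,'h) fa set \<Rightarrow> ('h list \<Rightarrow> 'k) \<Rightarrow> bool" where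
  "good G W \<longleftrightarrow> (\<forall>g\<in>G. \<forall>u v. PS W (fa_mul [(1,u)] (fa_mul g [(1,v)])) = 0)"

lemma crit:
  assumes "\<And>W. good G W \<Longrightarrow> PS W p = PS W q"
  shows "fa_sub p q \<in> fa_ideal (G :: ('k::field,'h) fa set)"
proof (rule ccontr)
  assume nin: "fa_sub p q \<notin> fa_ideal G"
  have "fa_coeff (fa_sub p q) \<notin> (\<lambda>r. fa_coeff r) ` fa_ideal G"
  proof
    assume "fa_coeff (fa_sub p q) \<in> (\<lambda>r. fa_coeff r) ` fa_ideal G"
    then obtain r where r: "r \<in> fa_ideal G" "fa_coeff (fa_sub p q) = fa_coeff r" by blast
    have "fa_sub p q \<in> fa_ideal G" by (rule fa_ideal.eq[OF r(1)]) (simp add: fa_eq_def r(2))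
    thus False using nin by blast
  qed
  then obtain \<phi> where \<phi>: "Vector_Spaces.linear sV (*) \<phi>" "\<forall>u\<in>(\<lambda>r. fa_coeff r) ` fa_ideal G. \<phi> u = 0"
    "\<phi> (fa_coeff (fa_sub p q)) = 1"
    using separate_sub[OF vs_sV subspace_J] by blast
  have l: "lin sV (*) \<phi>" using \<phi>(1) linear_lin by blast
  define W where "W = (\<lambda>w. \<phi> (fa_coeff [(1::'k,w)]))"
  have PSW: "PS W r = \<phi> (fa_coeff r)" for r unfolding W_def by (rule PS_coeff[OF l])
  have "good G W" unfolding good_def
  proof (intro ballI allI)
    fix g u v assume "g \<in> G"
    hence "fa_mul [(1,u)] (fa_mul g [(1,v)]) \<in> fa_ideal G" by (rule fa_ideal.gen_mul)
    thus "PS W (fa_mul [(1,u)] (fa_mul g [(1,v)])) = 0" using \<phi>(2) PSW by auto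
  qed
  hence "PS W p = PS W q" by (rule assms)
  hence z: "PS W (fa_sub p q) = 0" by simp
  have "PS W (fa_sub p q) = 1" using PSW[of "fa_sub p q"] \<phi>(3) by (simp del: PS_sub)
  thus False using z by simp
qed

context wha begin

abbreviation "GG \<equiv> lin_rels sc \<union> parw_rels \<Delta> S"

lemma good_PS: "good GG W \<Longrightarrow> g \<in> GG \<Longrightarrow> PS (\<lambda>w. W (u @ w @ v)) g = 0"
  unfolding good_def using PS_sandwich[of W u g v] by (simp add: PS_def)

lemma aux1: "(A::'a::ab_group_add) + (- B - C) = 0 \<Longrightarrow> A = B + C"
  by (simp add: algebra_simps)
lemma aux2: "(A::'a::ab_group_add) + - B = 0 \<Longrightarrow> A = B"
  by (simp add: algebra_simps)

lemma good_lin: assumes gW: "good GG W" shows "lin sc (*) (\<lambda>a. W (u @ [a] @ v))"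
proof -
  have add: "W (u @ [a + b] @ v) = W (u @ [a] @ v) + W (u @ [b] @ v)" for a b
  proof -
    have "fa_sub (gen (a + b)) (gen a @ gen b) \<in> GG" by (rule UnI1, unfold lin_rels_def, rule UnI1, blast)
    from good_PS[OF gW this, of u v] have "W (u @ [a+b] @ v) - (W (u @ [a] @ v) + W (u @ [b] @ v)) = 0"
      by (simp add: gen_def)
    thus ?thesis by simp
  qed
  have scl: "W (u @ [sc c a] @ v) = c * W (u @ [a] @ v)" for c a
  proof -
    have "fa_sub (gen (sc c a)) [(c, [a])] \<in> GG" by (rule UnI1, unfold lin_rels_def, rule UnI2, blast)
    from good_PS[OF gW this, of u v] have "W (u @ [sc c a] @ v) - c * W (u @ [a] @ v) = 0"
      by (simp add: gen_def)
    thus ?thesis by simp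
  qed
  show ?thesis unfolding lin_def using add scl by simp
qed

lemma good_bil: assumes gW: "good GG W" shows "bil2 sc (*) (\<lambda>p q. W (u @ [p, q] @ v))"
  unfolding bil2_def
proof (intro conjI allI)
  fix q show "lin sc (*) (\<lambda>p. W (u @ [p, q] @ v))" using good_lin[OF gW, of u "q # v"] by simp
next
  fix p show "lin sc (*) (\<lambda>q. W (u @ [p, q] @ v))" using good_lin[OF gW, of "u @ [p]" v] by simp
qed

lemma good_tril: assumes gW: "good GG W" shows "tril3 sc (*) (\<lambda>p q r. W (u @ [p, q, r] @ v))"
  unfolding tril3_def
proof (intro conjI allI)
  fix q r show "lin sc (*) (\<lambda>p. W (u @ [p, q, r] @ v))" using good_lin[OF gW, of u "q # r # v"] by simp
next
  fix p r show "lin sc (*) (\<lambda>q. W (u @ [p, q, r] @ v))" using good_lin[OF gW, of "u @ [p]" "r # v"] by simp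
next
  fix p q show "lin sc (*) (\<lambda>r. W (u @ [p, q, r] @ v))" using good_lin[OF gW, of "u @ [p, q]" v] by simp
qed

lemma D_diff0: "D k (\<lambda>x y. A x y - B x y) = (0::'a::ab_group_add) \<Longrightarrow> D k A = D k B"
  unfolding D_def by (simp add: split_def sum_list_subtractf)

lemma R2: assumes gW: "good GG W"
  shows "D k (\<lambda>x y. W (u @ [h, x, S y] @ v)) = D k (\<lambda>x y. W (u @ [h * x, S y] @ v))"
proof -
  have "fa_sum (\<lambda>(x,y). fa_sub [(1,[h, x, S y])] [(1,[h * x, S y])]) (\<Delta> k) \<in> GG"
    unfolding parw_rels_def by blast
  from good_PS[OF gW this, of u v] show ?thesis
    by (intro D_diff0) (simp add: D_def split_def comp_def)
qed

lemma R3: assumes gW: "good GG W"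
  shows "D k (\<lambda>x y. W (u @ [h, S x, y] @ v)) = D k (\<lambda>x y. W (u @ [h * S x, y] @ v))"
proof -
  have "fa_sum (\<lambda>(x,y). fa_sub [(1,[h, S x, y])] [(1,[h * S x, y])]) (\<Delta> k) \<in> GG"
    unfolding parw_rels_def by blast
  from good_PS[OF gW this, of u v] show ?thesis
    by (intro D_diff0) (simp add: D_def split_def comp_def)
qed

lemma R4: assumes gW: "good GG W"
  shows "D h (\<lambda>x y. W (u @ [x, S y, k] @ v)) = D h (\<lambda>x y. W (u @ [x, S y * k] @ v))"
proof -
  have "fa_sum (\<lambda>(x,y). fa_sub [(1,[x, S y, k])] [(1,[x, S y * k])]) (\<Delta> h) \<in> GG"
    unfolding parw_rels_def by blast
  from good_PS[OF gW this, of u v] show ?thesis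
    by (intro D_diff0) (simp add: D_def split_def comp_def)
qed

lemma R5: assumes gW: "good GG W"
  shows "D h (\<lambda>x y. W (u @ [S x, y, k] @ v)) = D h (\<lambda>x y. W (u @ [S x, y * k] @ v))"
proof -
  have "fa_sum (\<lambda>(x,y). fa_sub [(1,[S x, y, k])] [(1,[S x, y * k])]) (\<Delta> h) \<in> GG"
    unfolding parw_rels_def by blast
  from good_PS[OF gW this, of u v] show ?thesis
    by (intro D_diff0) (simp add: D_def split_def comp_def)
qed

end

lemma PS_concat: "PS W (concat xss) = sum_list (map (PS W) xss)"
  by (induct xss) auto

lemma sum_list_map_fa_mul: "sum_list (map f (fa_mul p q)) = sum_list (map (\<lambda>(c,u). sum_list (map (\<lambda>(d,v). f (c * d, u @ v)) q)) p)"
  by (simp add: fa_mul_def sum_list_map_concat split_def comp_def)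

context wha begin

lemmas PSsimps = sum_list_map_fa_mul PS_concat PS_mul E_el_def Et_el_def gen_def fa_sum_def D_def sum_list_map_concat split_def comp_def

lemma PS_aL: "PS W (fa_mul (E_el \<Delta> S k) (gen h)) = D k (\<lambda>x y. W [x, S y, h])"
  by (simp add: PSsimps)

lemma PS_aR: "PS W (fa_sum (\<lambda>(x,y). fa_mul (gen y) (E_el \<Delta> S (inv S x * k))) (\<Delta> h))
   = D h (\<lambda>x y. D (inv S x * k) (\<lambda>c d. W [y, c, S d]))"
  by (simp add: PSsimps)

lemma PS_bL: "PS W (fa_mul (gen h) (Et_el \<Delta> S k)) = D k (\<lambda>x y. W [h, S x, y])"
  by (simp add: PSsimps)

lemma PS_bR: "PS W (fa_sum (\<lambda>(x,y). fa_mul (Et_el \<Delta> S (k * inv S y)) (gen x)) (\<Delta> h))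
   = D h (\<lambda>x y. D (k * inv S y) (\<lambda>c d. W [S c, d, x]))"
  by (simp add: PSsimps)

lemma PS_cR: "PS W (fa_sum (\<lambda>(x,y). fa_mul (Et_el \<Delta> S (inv S y)) (fa_mul (E_el \<Delta> S k) (gen x))) (\<Delta> h))
   = D h (\<lambda>x y. D (inv S y) (\<lambda>a b. D k (\<lambda>c d. W [S a, b, c, S d, x])))"
  by (simp add: PSsimps)

lemma PS_dR: "PS W (fa_sum (\<lambda>(x,y). fa_mul (gen y) (fa_mul (Et_el \<Delta> S k) (E_el \<Delta> S (inv S x)))) (\<Delta> h))
   = D h (\<lambda>x y. D k (\<lambda>c d. D (inv S x) (\<lambda>a b. W [y, S c, d, a, S b])))"
  by (simp add: PSsimps)

end

context wha begin

lemma R2a: "good GG W \<Longrightarrow> D k (\<lambda>x y. W [h, x, S y]) = D k (\<lambda>x y. W [h * x, S y])"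
  using R2[where u="[]" and v="[]" and W=W and k=k and h=h] by simp
lemma R3a: "good GG W \<Longrightarrow> D k (\<lambda>x y. W [h, S x, y]) = D k (\<lambda>x y. W [h * S x, y])"
  using R3[where u="[]" and v="[]" and W=W and k=k and h=h] by simp
lemma R4a: "good GG W \<Longrightarrow> D h (\<lambda>x y. W [x, S y, k]) = D h (\<lambda>x y. W [x, S y * k])"
  using R4[where u="[]" and v="[]" and W=W and k=k and h=h] by simp
lemma R5a: "good GG W \<Longrightarrow> D h (\<lambda>x y. W [S x, y, k]) = D h (\<lambda>x y. W [S x, y * k])"
  using R5[where u="[]" and v="[]" and W=W and k=k and h=h] by simp
lemma R4c: "good GG W \<Longrightarrow> D k (\<lambda>c d. W [p, q, c, S d, z]) = D k (\<lambda>c d. W [p, q, c, S d * z])"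
  using R4[where u="[p, q]" and v="[]" and W=W and k=z and h=k] by simp
lemma R5c: "good GG W \<Longrightarrow> D h (\<lambda>a b. W [S a, b, c, r]) = D h (\<lambda>a b. W [S a, b * c, r])"
  using R5[where u="[]" and v="[r]" and W=W and k=c and h=h] by simp
lemma R3d: "good GG W \<Longrightarrow> D k (\<lambda>c d. W [y, S c, d, a, r]) = D k (\<lambda>c d. W [y * S c, d, a, r])"
  using R3[where u="[]" and v="[a, r]" and W=W and k=k and h=y] by simp
lemma R2d: "good GG W \<Longrightarrow> D h (\<lambda>a b. W [p, d, a, S b]) = D h (\<lambda>a b. W [p, d * a, S b])"
  using R2[where u="[p]" and v="[]" and W=W and k=h and h=d] by simp

lemma bilW: "good GG W \<Longrightarrow> bil2 sc (*) (\<lambda>p q. W [p, q])"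
  using good_bil[where u="[]" and v="[]" and W=W] by simp
lemma trilW: "good GG W \<Longrightarrow> tril3 sc (*) (\<lambda>p q r. W [p, q, r])"
  using good_tril[where u="[]" and v="[]" and W=W] by simp

lemma PSa: assumes gW: "good GG W"
  shows "PS W (fa_mul (E_el \<Delta> S k) (gen h)) = D h (\<lambda>x y. D (inv S x * k) (\<lambda>c d. W [y, c, S d]))"
proof -
  have "PS W (fa_mul (E_el \<Delta> S k) (gen h)) = D k (\<lambda>x y. W [x, S y, h])" by (rule PS_aL)
  also have "\<dots> = D k (\<lambda>x y. W [x, S y * h])" by (rule R4a[OF gW])
  also have "\<dots> = D h (\<lambda>x y. D (inv S x * k) (\<lambda>c d. W [y * c, S d]))"
    by (rule idA[OF vs_field bilW[OF gW]])
  also have "\<dots> = D h (\<lambda>x y. D (inv S x * k) (\<lambda>c d. W [y, c, S d]))"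
    by (rule D_cong) (rule R2a[OF gW, symmetric])
  finally show ?thesis .
qed

lemma PSb: assumes gW: "good GG W"
  shows "PS W (fa_mul (gen h) (Et_el \<Delta> S k)) = D h (\<lambda>x y. D (k * inv S y) (\<lambda>c d. W [S c, d, x]))"
proof -
  have "PS W (fa_mul (gen h) (Et_el \<Delta> S k)) = D k (\<lambda>x y. W [h, S x, y])" by (rule PS_bL)
  also have "\<dots> = D k (\<lambda>x y. W [h * S x, y])" by (rule R3a[OF gW])
  also have "\<dots> = D h (\<lambda>x y. D (k * inv S y) (\<lambda>c d. W [S c, d * x]))"
    by (rule idB[OF vs_field bilW[OF gW]])
  also have "\<dots> = D h (\<lambda>x y. D (k * inv S y) (\<lambda>c d. W [S c, d, x]))"
    by (rule D_cong) (rule R5a[OF gW, symmetric])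
  finally show ?thesis .
qed

lemma main_a: "parw_eq sc \<Delta> S (fa_mul (E_el \<Delta> S k) (gen h))
        (fa_sum (\<lambda>(x,y). fa_mul (gen y) (E_el \<Delta> S (inv S x * k))) (\<Delta> h))"
  unfolding parw_eq_def by (rule crit) (simp del: PS_sum add: PSa PS_aR)

lemma main_b: "parw_eq sc \<Delta> S (fa_mul (gen h) (Et_el \<Delta> S k))
        (fa_sum (\<lambda>(x,y). fa_mul (Et_el \<Delta> S (k * inv S y)) (gen x)) (\<Delta> h))"
  unfolding parw_eq_def by (rule crit) (simp del: PS_sum add: PSb PS_bR)

lemma main_c: "parw_eq sc \<Delta> S (fa_mul (E_el \<Delta> S k) (gen h))
        (fa_sum (\<lambda>(x,y). fa_mul (Et_el \<Delta> S (inv S y)) (fa_mul (E_el \<Delta> S k) (gen x))) (\<Delta> h))"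
  unfolding parw_eq_def
proof (rule crit)
  fix W assume gW: "good GG W"
  note LF = L_T1[OF trilW[OF gW]] L_T2[OF trilW[OF gW]] L_T3[OF trilW[OF gW]]
  have "PS W (fa_sum (\<lambda>(x,y). fa_mul (Et_el \<Delta> S (inv S y)) (fa_mul (E_el \<Delta> S k) (gen x))) (\<Delta> h))
      = D h (\<lambda>x y. D (inv S y) (\<lambda>a b. D k (\<lambda>c d. W [S a, b, c, S d, x])))" by (rule PS_cR)
  also have "\<dots> = D h (\<lambda>x y. D (inv S y) (\<lambda>a b. D k (\<lambda>c d. W [S a, b, c, S d * x])))"
    by (rule D_cong, rule D_cong, rule R4c[OF gW])
  also have "\<dots> = D h (\<lambda>x y. D k (\<lambda>c d. D (inv S y) (\<lambda>a b. W [S a, b, c, S d * x])))"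
    by (rule D_cong) (rule D_swap)
  also have "\<dots> = D h (\<lambda>x y. D k (\<lambda>c d. D (inv S y) (\<lambda>a b. W [S a, b * c, S d * x])))"
    by (rule D_cong, rule D_cong, rule R5c[OF gW])
  also have "\<dots> = D h (\<lambda>x y. D (inv S y) (\<lambda>a b. D k (\<lambda>c d. W [S a, b * c, S d * x])))"
    by (rule D_cong) (rule D_swap)
  also have "\<dots> = D h (\<lambda>x y. D (inv S x * k) (\<lambda>c d. W [y, c, S d]))"
    by (rule idA3[OF vs_field trilW[OF gW], symmetric])
  also have "\<dots> = PS W (fa_mul (E_el \<Delta> S k) (gen h))" by (rule PSa[OF gW, symmetric])
  finally show "PS W (fa_mul (E_el \<Delta> S k) (gen h)) =
     PS W (fa_sum (\<lambda>(x,y). fa_mul (Et_el \<Delta> S (inv S y)) (fa_mul (E_el \<Delta> S k) (gen x))) (\<Delta> h))" by (rule sym)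
qed

lemma main_d: "parw_eq sc \<Delta> S (fa_mul (gen h) (Et_el \<Delta> S k))
        (fa_sum (\<lambda>(x,y). fa_mul (gen y) (fa_mul (Et_el \<Delta> S k) (E_el \<Delta> S (inv S x)))) (\<Delta> h))"
  unfolding parw_eq_def
proof (rule crit)
  fix W assume gW: "good GG W"
  have "PS W (fa_sum (\<lambda>(x,y). fa_mul (gen y) (fa_mul (Et_el \<Delta> S k) (E_el \<Delta> S (inv S x)))) (\<Delta> h))
      = D h (\<lambda>x y. D k (\<lambda>c d. D (inv S x) (\<lambda>a b. W [y, S c, d, a, S b])))" by (rule PS_dR)
  also have "\<dots> = D h (\<lambda>x y. D (inv S x) (\<lambda>a b. D k (\<lambda>c d. W [y, S c, d, a, S b])))"
    by (rule D_cong) (rule D_swap)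
  also have "\<dots> = D h (\<lambda>x y. D (inv S x) (\<lambda>a b. D k (\<lambda>c d. W [y * S c, d, a, S b])))"
    by (rule D_cong, rule D_cong, rule R3d[OF gW])
  also have "\<dots> = D h (\<lambda>x y. D k (\<lambda>c d. D (inv S x) (\<lambda>a b. W [y * S c, d, a, S b])))"
    by (rule D_cong) (rule D_swap)
  also have "\<dots> = D h (\<lambda>x y. D k (\<lambda>c d. D (inv S x) (\<lambda>a b. W [y * S c, d * a, S b])))"
    by (rule D_cong, rule D_cong, rule R2d[OF gW])
  also have "\<dots> = D h (\<lambda>x y. D (k * inv S y) (\<lambda>c d. W [S c, d, x]))"
    by (rule idB3[OF vs_field trilW[OF gW], symmetric])
  also have "\<dots> = PS W (fa_mul (gen h) (Et_el \<Delta> S k))" by (rule PSb[OF gW, symmetric])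
  finally show "PS W (fa_mul (gen h) (Et_el \<Delta> S k)) =
     PS W (fa_sum (\<lambda>(x,y). fa_mul (gen y) (fa_mul (Et_el \<Delta> S k) (E_el \<Delta> S (inv S x)))) (\<Delta> h))" by (rule sym)
qed

end

theorem proposition4p5:
  fixes sc :: "'k::field \<Rightarrow> 'h::ring_1 \<Rightarrow> 'h"
    and \<Delta> :: "'h \<Rightarrow> ('h \<times> 'h) list"
    and \<epsilon> :: "'h \<Rightarrow> 'k"
    and S :: "'h \<Rightarrow> 'h"
  assumes "weak_hopf sc \<Delta> \<epsilon> S"
    and "bij S"
  shows
    "(\<forall>h k. parw_eq sc \<Delta> S
        (fa_mul (E_el \<Delta> S k) (gen h))
        (fa_sum (\<lambda>(x,y). fa_mul (gen y) (E_el \<Delta> S (inv S x * k))) (\<Delta> h)))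
   \<and> (\<forall>h k. parw_eq sc \<Delta> S
        (fa_mul (gen h) (Et_el \<Delta> S k))
        (fa_sum (\<lambda>(x,y). fa_mul (Et_el \<Delta> S (k * inv S y)) (gen x)) (\<Delta> h)))
   \<and> (\<forall>h k. parw_eq sc \<Delta> S
        (fa_mul (E_el \<Delta> S k) (gen h))
        (fa_sum (\<lambda>(x,y). fa_mul (Et_el \<Delta> S (inv S y)) (fa_mul (E_el \<Delta> S k) (gen x))) (\<Delta> h)))
   \<and> (\<forall>h k. parw_eq sc \<Delta> S
        (fa_mul (gen h) (Et_el \<Delta> S k))
        (fa_sum (\<lambda>(x,y). fa_mul (gen y) (fa_mul (Et_el \<Delta> S k) (E_el \<Delta> S (inv S x)))) (\<Delta> h)))"
proof -
  interpret wha sc \<Delta> \<epsilon> S using assms by (simp add: wha_def)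
  show ?thesis using main_a main_b main_c main_d by blast
qed

end
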